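(* For any $p,p'>0$ and any separable complex Hilbert space $\mathcal{H}$, $\mathbf{C}^{(2)}_p(\mathcal{H})=\mathbf{C}^{(2)}_{p'}(\mathcal{H})$.
   Context: Observables are self-adjoint operators on $\mathcal{H}$. For an operator $A$ on $\mathcal{H}$, $A^T$ is the operator on the dual $\mathcal{H}^*$ with $(A^T\eta)(\varphi)=\eta(A\varphi)$. For a finite collection $\mathcal{A}=\{A_1,\dots,A_K\}$ of observables and $0<p<\infty$, $C_{\mathcal{A},p}=\sum_{k=1}^K|A_k\otimes I^T-I\otimes A_k^T|^p$ on $\mathcal{H}\otimes\mathcal{H}^*$. For $k\in\mathbb{N}$, $\mathbf{C}^{(k)}_p(\mathcal{H})=\{C_{\mathcal{A},p}:\ \mathcal{A}\text{ a finite collection of observables on }\mathcal{H}\text{ with }\#\mathrm{spec}(A)\le k\text{ for all }A\in\mathcal{A}\}$. *)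

theory Defs
  imports "HOL-Analysis.Analysis"
begin

text \<open>Concrete model: a separable complex Hilbert space is (up to unitary equivalence)
  l2(I) for a countable index set I (here I is a set of naturals; finite I gives
  finite dimension).  H tensor H* is modelled as l2(I x I) via the basis
  e_i tensor e_j^*, where e_j^* is the dual basis functional phi maps to phi_j.
  Operators on l2(J) are functions on J-indexed families that vanish outside l2(J).\<close>

definition l2 :: "'j set \<Rightarrow> ('j \<Rightarrow> complex) set" where
  "l2 J = {f. (\<forall>j. j \<notin> J \<longrightarrow> f j = 0) \<and> (\<lambda>j. (cmod (f j))^2) summable_on J}"

definition l2norm :: "'j set \<Rightarrow> ('j \<Rightarrow> complex) \<Rightarrow> real" where
  "l2norm J f = sqrt (infsum (\<lambda>j. (cmod (f j))^2) J)"

definition l2inner :: "'j set \<Rightarrow> ('j \<Rightarrow> complex) \<Rightarrow> ('j \<Rightarrow> complex) \<Rightarrow> complex" where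
  "l2inner J f g = infsum (\<lambda>j. cnj (f j) * g j) J"

definition is_bop :: "'j set \<Rightarrow> (('j \<Rightarrow> complex) \<Rightarrow> ('j \<Rightarrow> complex)) \<Rightarrow> bool" where
  "is_bop J A \<longleftrightarrow>
     (\<forall>f. f \<notin> l2 J \<longrightarrow> A f = (\<lambda>j. 0)) \<and>
     (\<forall>f\<in>l2 J. A f \<in> l2 J) \<and>
     (\<forall>f\<in>l2 J. \<forall>g\<in>l2 J. A (\<lambda>j. f j + g j) = (\<lambda>j. A f j + A g j)) \<and>
     (\<forall>f\<in>l2 J. \<forall>c. A (\<lambda>j. c * f j) = (\<lambda>j. c * A f j)) \<and>
     (\<exists>C. \<forall>f\<in>l2 J. l2norm J (A f) \<le> C * l2norm J f)"

definition idop :: "'j set \<Rightarrow> ('j \<Rightarrow> complex) \<Rightarrow> ('j \<Rightarrow> complex)" where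
  "idop J = (\<lambda>f. if f \<in> l2 J then f else (\<lambda>j. 0))"

definition observable :: "'j set \<Rightarrow> (('j \<Rightarrow> complex) \<Rightarrow> ('j \<Rightarrow> complex)) \<Rightarrow> bool" where
  "observable J A \<longleftrightarrow> is_bop J A \<and>
     (\<forall>f\<in>l2 J. \<forall>g\<in>l2 J. l2inner J (A f) g = l2inner J f (A g))"

definition spectrum :: "'j set \<Rightarrow> (('j \<Rightarrow> complex) \<Rightarrow> ('j \<Rightarrow> complex)) \<Rightarrow> complex set" where
  "spectrum J A = {z. \<not> (\<exists>B. is_bop J B \<and>
      (\<forall>f\<in>l2 J. B (\<lambda>j. A f j - z * f j) = f \<and> (\<lambda>j. A (B f) j - z * B f j) = f))}"

definition specR :: "'j set \<Rightarrow> (('j \<Rightarrow> complex) \<Rightarrow> ('j \<Rightarrow> complex)) \<Rightarrow> real set" where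
  "specR J A = Re ` spectrum J A"

text \<open>Functional calculus for self-adjoint operators with finite spectrum:
  h(X) = sum over spectral values lam of h(lam) E_lam, with the spectral projection
  E_lam = prod over mu in spec - {lam} of (X - mu)/(lam - mu) (Lagrange interpolation).\<close>
definition proj_factor :: "'j set \<Rightarrow> (('j \<Rightarrow> complex) \<Rightarrow> ('j \<Rightarrow> complex)) \<Rightarrow> real \<Rightarrow> real
    \<Rightarrow> ('j \<Rightarrow> complex) \<Rightarrow> ('j \<Rightarrow> complex)" where
  "proj_factor J X lam mu = (\<lambda>f. if f \<in> l2 J then
      (\<lambda>j. (X f j - complex_of_real mu * f j) / complex_of_real (lam - mu)) else (\<lambda>j. 0))"

definition spectral_proj :: "'j set \<Rightarrow> (('j \<Rightarrow> complex) \<Rightarrow> ('j \<Rightarrow> complex)) \<Rightarrow> real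
    \<Rightarrow> ('j \<Rightarrow> complex) \<Rightarrow> ('j \<Rightarrow> complex)" where
  "spectral_proj J X lam =
     foldr (\<lambda>mu T. proj_factor J X lam mu \<circ> T) (sorted_list_of_set (specR J X - {lam})) (idop J)"

definition fcalc :: "'j set \<Rightarrow> (real \<Rightarrow> real) \<Rightarrow> (('j \<Rightarrow> complex) \<Rightarrow> ('j \<Rightarrow> complex))
    \<Rightarrow> ('j \<Rightarrow> complex) \<Rightarrow> ('j \<Rightarrow> complex)" where
  "fcalc J h X = (\<lambda>f j. \<Sum>lam\<in>specR J X. complex_of_real (h lam) * spectral_proj J X lam f j)"

definition abs_pow :: "'j set \<Rightarrow> real \<Rightarrow> (('j \<Rightarrow> complex) \<Rightarrow> ('j \<Rightarrow> complex))
    \<Rightarrow> ('j \<Rightarrow> complex) \<Rightarrow> ('j \<Rightarrow> complex)" where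
  "abs_pow J p X = fcalc J (\<lambda>x. \<bar>x\<bar> powr p) X"

definition basis_vec :: "nat \<Rightarrow> nat \<Rightarrow> complex" where
  "basis_vec k = (\<lambda>i. if i = k then 1 else 0)"

text \<open>A tensor I^T - I tensor A^T on l2(I x I):
  ((A tensor I) psi)(i,j) = (A psi(-,j))(i), and
  ((I tensor A^T) psi)(i,j) = sum_k psi(i,k) (A e_j)_k, since (A^T eta)_j = eta(A e_j).\<close>
definition Delta :: "nat set \<Rightarrow> ((nat \<Rightarrow> complex) \<Rightarrow> (nat \<Rightarrow> complex))
    \<Rightarrow> (nat \<times> nat \<Rightarrow> complex) \<Rightarrow> (nat \<times> nat \<Rightarrow> complex)" where
  "Delta I A = (\<lambda>\<psi>. if \<psi> \<in> l2 (I \<times> I) then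
      (\<lambda>(i, j). A (\<lambda>i'. \<psi> (i', j)) i - infsum (\<lambda>k. \<psi> (i, k) * A (basis_vec j) k) I)
    else (\<lambda>x. 0))"

definition Cop :: "nat set \<Rightarrow> ((nat \<Rightarrow> complex) \<Rightarrow> (nat \<Rightarrow> complex)) list \<Rightarrow> real
    \<Rightarrow> (nat \<times> nat \<Rightarrow> complex) \<Rightarrow> (nat \<times> nat \<Rightarrow> complex)" where
  "Cop I As p = (\<lambda>\<psi> x. sum_list (map (\<lambda>A. abs_pow (I \<times> I) p (Delta I A) \<psi> x) As))"

definition Cclass :: "nat set \<Rightarrow> nat \<Rightarrow> real
    \<Rightarrow> ((nat \<times> nat \<Rightarrow> complex) \<Rightarrow> (nat \<times> nat \<Rightarrow> complex)) set" where
  "Cclass I k p = {Cop I As p | As. \<forall>A\<in>set As.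
      observable I A \<and> finite (spectrum I A) \<and> card (spectrum I A) \<le> k}"

end

theory Submission
  imports Defs
begin


definition nsq :: "'j set \<Rightarrow> ('j \<Rightarrow> complex) \<Rightarrow> real" where
  "nsq J f = infsum (\<lambda>j. (cmod (f j))^2) J"

lemma l2D: "f \<in> l2 J \<Longrightarrow> (\<lambda>j. (cmod (f j))^2) summable_on J"
  by (simp add: l2_def)

lemma l2_out: "f \<in> l2 J \<Longrightarrow> j \<notin> J \<Longrightarrow> f j = 0"
  by (simp add: l2_def)

lemma l2I: "(\<And>j. j \<notin> J \<Longrightarrow> f j = 0) \<Longrightarrow> (\<lambda>j. (cmod (f j))^2) summable_on J \<Longrightarrow> f \<in> l2 J"
  by (simp add: l2_def)

lemma l2_zero[simp]: "(\<lambda>j. 0) \<in> l2 J"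
  by (simp add: l2_def)

lemma l2_eq_zero: "f = (\<lambda>j. 0) \<Longrightarrow> f \<in> l2 J" by simp

lemma sq_add_le: "(cmod (a + b))^2 \<le> 2 * (cmod a)^2 + 2 * (cmod b)^2"
proof -
  have "cmod (a+b) \<le> cmod a + cmod b" by (rule norm_triangle_ineq)
  hence "(cmod (a + b))^2 \<le> (cmod a + cmod b)^2" by (simp add: power_mono)
  also have "\<dots> \<le> 2 * (cmod a)^2 + 2 * (cmod b)^2"
  proof -
    have "0 \<le> (cmod a - cmod b)^2" by simp
    thus ?thesis by (simp add: power2_eq_square algebra_simps)
  qed
  finally show ?thesis .
qed

lemma l2_add: "f \<in> l2 J \<Longrightarrow> g \<in> l2 J \<Longrightarrow> (\<lambda>j. f j + g j) \<in> l2 J"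
  apply (rule l2I)
   apply (simp add: l2_out)
  apply (rule summable_on_comparison_test[where f="\<lambda>j. 2 * (cmod (f j))^2 + 2 * (cmod (g j))^2"])
    apply (intro summable_on_add summable_on_cmult_right l2D; assumption)
  using sq_add_le by auto

lemma l2_scale: "f \<in> l2 J \<Longrightarrow> (\<lambda>j. c * f j) \<in> l2 J"
  apply (rule l2I)
   apply (simp add: l2_out)
  apply (simp add: norm_mult power_mult_distrib)
  by (intro summable_on_cmult_right l2D)

lemma l2_diff: "f \<in> l2 J \<Longrightarrow> g \<in> l2 J \<Longrightarrow> (\<lambda>j. f j - g j) \<in> l2 J"
  using l2_add[of f J "\<lambda>j. (-1) * g j"] l2_scale[of g J "-1"] by simp

lemma l2_cnj: "f \<in> l2 J \<Longrightarrow> (\<lambda>j. cnj (f j)) \<in> l2 J"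
  by (simp add: l2_def)

lemma l2_lin: "f \<in> l2 J \<Longrightarrow> g \<in> l2 J \<Longrightarrow> (\<lambda>j. a * f j + b * g j) \<in> l2 J"
  by (intro l2_add l2_scale)

lemma prod_le_sq: "cmod (a * b) \<le> (cmod a)^2 + (cmod b)^2"
proof -
  have "2 * (cmod a * cmod b) \<le> (cmod a)^2 + (cmod b)^2"
  proof -
    have "0 \<le> (cmod a - cmod b)^2" by simp
    thus ?thesis by (simp add: power2_eq_square algebra_simps)
  qed
  moreover have "cmod a * cmod b \<ge> 0" by simp
  ultimately show ?thesis unfolding norm_mult by linarith
qed

lemma l2_prod_summable: "f \<in> l2 J \<Longrightarrow> g \<in> l2 J \<Longrightarrow> (\<lambda>j. f j * g j) summable_on J"
proof (rule abs_summable_summable)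
  assume "f \<in> l2 J" "g \<in> l2 J"
  have "(\<lambda>j. (cmod (f j))^2 + (cmod (g j))^2) summable_on J"
    by (intro summable_on_add l2D) fact+
  from Infinite_Sum.abs_summable_on_comparison_test'[OF this prod_le_sq]
  show "(\<lambda>x. norm (f x * g x)) summable_on J" by simp
qed

lemma l2_inner_summable: "f \<in> l2 J \<Longrightarrow> g \<in> l2 J \<Longrightarrow> (\<lambda>j. cnj (f j) * g j) summable_on J"
  by (intro l2_prod_summable l2_cnj)

lemma nsq_nonneg: "nsq J f \<ge> 0"
  unfolding nsq_def by (rule infsum_nonneg) simp

lemma l2norm_sq: "(l2norm J f)^2 = nsq J f"
  unfolding l2norm_def nsq_def[symmetric] using nsq_nonneg by simp

lemma l2norm_nonneg: "l2norm J f \<ge> 0"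
  unfolding l2norm_def using nsq_nonneg[unfolded nsq_def] by simp

lemma l2norm_nsq: "l2norm J f = sqrt (nsq J f)"
  unfolding l2norm_def nsq_def by simp

lemma inner_self: assumes "f \<in> l2 J" shows "l2inner J f f = complex_of_real (nsq J f)"
proof -
  have "l2inner J f f = infsum (\<lambda>j. complex_of_real ((cmod (f j))^2)) J"
    unfolding l2inner_def by (intro infsum_cong) (metis complex_norm_square mult.commute of_real_power)
  also have "\<dots> = complex_of_real (nsq J f)"
    unfolding nsq_def
    by (rule infsumI, subst has_sum_of_real_iff, rule has_sum_infsum, rule l2D, fact)
  finally show ?thesis .
qed



lemma sq_expand: "(cmod (a + b))^2 = (cmod a)^2 + (cmod b)^2 + 2 * Re (cnj a * b)"
  unfolding cmod_power2 by (simp add: power2_eq_square algebra_simps)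

lemma nsq_add:
  assumes f: "f \<in> l2 J" and g: "g \<in> l2 J"
  shows "nsq J (\<lambda>j. f j + g j) = nsq J f + nsq J g + 2 * Re (l2inner J f g)"
proof -
  have s1: "(\<lambda>j. (cmod (f j))^2) summable_on J" "(\<lambda>j. (cmod (g j))^2) summable_on J"
    using f g by (auto intro: l2D)
  have s2: "(\<lambda>j. cnj (f j) * g j) summable_on J" by (rule l2_inner_summable[OF f g])
  have s3: "(\<lambda>j. 2 * Re (cnj (f j) * g j)) summable_on J"
    by (intro summable_on_cmult_right summable_on_Re s2)
  have "nsq J (\<lambda>j. f j + g j) = infsum (\<lambda>j. ((cmod (f j))^2 + (cmod (g j))^2) + 2 * Re (cnj (f j) * g j)) J"
    unfolding nsq_def by (intro infsum_cong) (simp add: sq_expand)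
  also have "\<dots> = infsum (\<lambda>j. (cmod (f j))^2 + (cmod (g j))^2) J + infsum (\<lambda>j. 2 * Re (cnj (f j) * g j)) J"
    by (intro infsum_add summable_on_add s1 s3)
  also have "infsum (\<lambda>j. (cmod (f j))^2 + (cmod (g j))^2) J = nsq J f + nsq J g"
    unfolding nsq_def by (intro infsum_add s1)
  also have "infsum (\<lambda>j. 2 * Re (cnj (f j) * g j)) J = 2 * Re (l2inner J f g)"
    unfolding l2inner_def by (subst infsum_cmult_right', subst infsum_Re[OF s2]) (rule refl)
  finally show ?thesis .
qed

lemma nsq_scale: "nsq J (\<lambda>j. c * f j) = (cmod c)^2 * nsq J f"
  unfolding nsq_def by (simp add: norm_mult power_mult_distrib infsum_cmult_right')

lemma l2norm_scale: "l2norm J (\<lambda>j. c * f j) = cmod c * l2norm J f"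
  unfolding l2norm_nsq nsq_scale by (simp add: real_sqrt_mult)

lemma nsq_add_le:
  assumes f: "f \<in> l2 J" and g: "g \<in> l2 J"
  shows "nsq J (\<lambda>j. f j + g j) \<le> 2 * nsq J f + 2 * nsq J g"
proof -
  have s1: "(\<lambda>j. (cmod (f j))^2) summable_on J" "(\<lambda>j. (cmod (g j))^2) summable_on J"
    using f g by (auto intro: l2D)
  have "nsq J (\<lambda>j. f j + g j) \<le> infsum (\<lambda>j. 2 * (cmod (f j))^2 + 2 * (cmod (g j))^2) J"
    unfolding nsq_def
    by (intro infsum_mono l2D l2_add f g summable_on_add summable_on_cmult_right s1 sq_add_le)
  also have "\<dots> = 2 * nsq J f + 2 * nsq J g"
    unfolding nsq_def by (simp add: infsum_add summable_on_cmult_right s1 infsum_cmult_right')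
  finally show ?thesis .
qed

lemma l2norm_add_le:
  assumes f: "f \<in> l2 J" and g: "g \<in> l2 J"
  shows "l2norm J (\<lambda>j. f j + g j) \<le> 2 * (l2norm J f + l2norm J g)"
proof (rule power2_le_imp_le)
  have "(l2norm J (\<lambda>j. f j + g j))^2 \<le> 2 * (l2norm J f)^2 + 2 * (l2norm J g)^2"
    unfolding l2norm_sq by (rule nsq_add_le[OF f g])
  also have "\<dots> \<le> (2 * (l2norm J f + l2norm J g))^2"
    using l2norm_nonneg[of J f] l2norm_nonneg[of J g]
    by (simp add: power2_eq_square algebra_simps)
  finally show "(l2norm J (\<lambda>j. f j + g j))^2 \<le> (2 * (l2norm J f + l2norm J g))^2" .
  show "0 \<le> 2 * (l2norm J f + l2norm J g)" using l2norm_nonneg[of J f] l2norm_nonneg[of J g] by simp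
qed

lemma nsq_zero:
  assumes f: "f \<in> l2 J" and z: "nsq J f = 0"
  shows "f = (\<lambda>j. 0)"
proof
  fix j show "f j = 0"
  proof (cases "j \<in> J")
    case True
    have "(cmod (f j))^2 = 0"
      by (rule nonneg_infsum_le_0D[where f="\<lambda>j. (cmod (f j))^2" and A=J])
         (use z l2D[OF f] True in \<open>auto simp: nsq_def\<close>)
    thus ?thesis by simp
  next
    case False thus ?thesis using l2_out[OF f] by simp
  qed
qed

lemma nsq_zero_fun[simp]: "nsq J (\<lambda>j. 0) = 0"
  by (simp add: nsq_def)

lemma l2norm_zero_fun[simp]: "l2norm J (\<lambda>j. 0) = 0"
  by (simp add: l2norm_def)

lemma inner_add_right:
  assumes "f \<in> l2 J" "g \<in> l2 J" "h \<in> l2 J"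
  shows "l2inner J f (\<lambda>j. g j + h j) = l2inner J f g + l2inner J f h"
  unfolding l2inner_def
  by (simp add: distrib_left infsum_add l2_inner_summable assms)

lemma inner_add_left:
  assumes "f \<in> l2 J" "g \<in> l2 J" "h \<in> l2 J"
  shows "l2inner J (\<lambda>j. f j + g j) h = l2inner J f h + l2inner J g h"
  unfolding l2inner_def
  by (simp add: distrib_right infsum_add l2_inner_summable assms)

lemma inner_scale_right: "l2inner J f (\<lambda>j. c * g j) = c * l2inner J f g"
  unfolding l2inner_def
  by (simp add: mult.left_commute infsum_cmult_right')

lemma inner_scale_left: "l2inner J (\<lambda>j. c * f j) g = cnj c * l2inner J f g"
  unfolding l2inner_def
  by (simp add: mult.assoc infsum_cmult_right')

lemma inner_commute: "l2inner J g f = cnj (l2inner J f g)"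
  unfolding l2inner_def infsum_cnj[symmetric] by (simp add: mult.commute)

lemma inner_diff_right:
  assumes "f \<in> l2 J" "g \<in> l2 J" "h \<in> l2 J"
  shows "l2inner J f (\<lambda>j. g j - h j) = l2inner J f g - l2inner J f h"
  using inner_add_right[OF assms(1,2) l2_scale[OF assms(3), of "-1"]] inner_scale_right[of J f "-1" h]
  by simp

lemma inner_diff_left:
  assumes "f \<in> l2 J" "g \<in> l2 J" "h \<in> l2 J"
  shows "l2inner J (\<lambda>j. f j - g j) h = l2inner J f h - l2inner J g h"
  using inner_add_left[OF assms(1) l2_scale[OF assms(2), of "-1"] assms(3)] inner_scale_left[of J "-1" g h]
  by simp

lemma nsq_diff:
  assumes f: "f \<in> l2 J" and g: "g \<in> l2 J"
  shows "nsq J (\<lambda>j. f j - g j) = nsq J f + nsq J g - 2 * Re (l2inner J f g)"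
  using nsq_add[OF f l2_scale[OF g, of "-1"]] nsq_scale[of J "-1" g] inner_scale_right[of J f "-1" g]
  by simp

lemma bop_l2: "is_bop J A \<Longrightarrow> f \<in> l2 J \<Longrightarrow> A f \<in> l2 J"
  by (simp add: is_bop_def)

lemma bop_out: "is_bop J A \<Longrightarrow> f \<notin> l2 J \<Longrightarrow> A f = (\<lambda>j. 0)"
  by (simp add: is_bop_def)

lemma bop_add: "is_bop J A \<Longrightarrow> f \<in> l2 J \<Longrightarrow> g \<in> l2 J \<Longrightarrow> A (\<lambda>j. f j + g j) = (\<lambda>j. A f j + A g j)"
  by (simp add: is_bop_def)

lemma bop_scale: "is_bop J A \<Longrightarrow> f \<in> l2 J \<Longrightarrow> A (\<lambda>j. c * f j) = (\<lambda>j. c * A f j)"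
  by (simp add: is_bop_def)

lemma bop_zero: "is_bop J A \<Longrightarrow> A (\<lambda>j. 0) = (\<lambda>j. 0)"
  using bop_scale[of J A "\<lambda>j. 0" 0] by simp

lemma bop_diff: "is_bop J A \<Longrightarrow> f \<in> l2 J \<Longrightarrow> g \<in> l2 J \<Longrightarrow> A (\<lambda>j. f j - g j) = (\<lambda>j. A f j - A g j)"
  using bop_add[of J A f "\<lambda>j. (-1) * g j"] bop_scale[of J A g "-1"] l2_scale[of g J "-1"]
  by simp

lemma bop_lin: "is_bop J A \<Longrightarrow> f \<in> l2 J \<Longrightarrow> g \<in> l2 J \<Longrightarrow>
   A (\<lambda>j. a * f j + b * g j) = (\<lambda>j. a * A f j + b * A g j)"
  using bop_add[of J A "\<lambda>j. a * f j" "\<lambda>j. b * g j"] bop_scale[of J A f a] bop_scale[of J A g b]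
    l2_scale[of f J a] l2_scale[of g J b]
  by simp

lemma bop_bound: assumes "is_bop J A" obtains C where "C \<ge> 0" "\<And>f. f \<in> l2 J \<Longrightarrow> l2norm J (A f) \<le> C * l2norm J f"
proof -
  obtain C where C: "\<forall>f\<in>l2 J. l2norm J (A f) \<le> C * l2norm J f" using assms by (auto simp: is_bop_def)
  show ?thesis
  proof (rule that[of "max C 0"])
    fix f assume "f \<in> l2 J"
    hence "l2norm J (A f) \<le> C * l2norm J f" using C by auto
    also have "\<dots> \<le> max C 0 * l2norm J f" by (intro mult_right_mono l2norm_nonneg) simp
    finally show "l2norm J (A f) \<le> max C 0 * l2norm J f" .
  qed simp
qed

definition polyop :: "'j set \<Rightarrow> complex \<Rightarrow> complex \<Rightarrow> complex \<Rightarrow> (('j \<Rightarrow> complex) \<Rightarrow> ('j \<Rightarrow> complex))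
   \<Rightarrow> ('j \<Rightarrow> complex) \<Rightarrow> ('j \<Rightarrow> complex)" where
  "polyop J c2 c1 c0 X = (\<lambda>f. if f \<in> l2 J then (\<lambda>j. c2 * X (X f) j + c1 * X f j + c0 * f j) else (\<lambda>j. 0))"

lemma polyop_bop:
  assumes X: "is_bop J X"
  shows "is_bop J (polyop J c2 c1 c0 X)"
proof -
  obtain C where C0: "C \<ge> 0" and C: "\<And>f. f \<in> l2 J \<Longrightarrow> l2norm J (X f) \<le> C * l2norm J f"
    using bop_bound[OF X] by blast
  have l2P: "polyop J c2 c1 c0 X f \<in> l2 J" if "f \<in> l2 J" for f
    unfolding polyop_def using that
    by (simp add: l2_add l2_scale bop_l2[OF X])
  show ?thesis unfolding is_bop_def
  proof (intro conjI ballI allI impI)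
    fix f assume "f \<notin> l2 J" thus "polyop J c2 c1 c0 X f = (\<lambda>j. 0)"
      by (simp add: polyop_def)
  next
    fix f assume "f \<in> l2 J" thus "polyop J c2 c1 c0 X f \<in> l2 J" by (rule l2P)
  next
    fix f g assume f: "f \<in> l2 J" and g: "g \<in> l2 J"
    have fg: "(\<lambda>j. f j + g j) \<in> l2 J" by (rule l2_add[OF f g])
    have "X (X (\<lambda>j. f j + g j)) = (\<lambda>j. X (X f) j + X (X g) j)"
      using bop_add[OF X f g] bop_add[OF X bop_l2[OF X f] bop_l2[OF X g]] by simp
    thus "polyop J c2 c1 c0 X (\<lambda>j. f j + g j) = (\<lambda>j. polyop J c2 c1 c0 X f j + polyop J c2 c1 c0 X g j)"
      unfolding polyop_def using f g fg bop_add[OF X f g] by (simp add: algebra_simps)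
  next
    fix f c assume f: "f \<in> l2 J"
    have fc: "(\<lambda>j. c * f j) \<in> l2 J" by (rule l2_scale[OF f])
    have "X (X (\<lambda>j. c * f j)) = (\<lambda>j. c * X (X f) j)"
      using bop_scale[OF X f] bop_scale[OF X bop_l2[OF X f]] by simp
    thus "polyop J c2 c1 c0 X (\<lambda>j. c * f j) = (\<lambda>j. c * polyop J c2 c1 c0 X f j)"
      unfolding polyop_def using f fc bop_scale[OF X f] by (simp add: algebra_simps)
  next
    show "\<exists>K. \<forall>f\<in>l2 J. l2norm J (polyop J c2 c1 c0 X f) \<le> K * l2norm J f"
    proof (intro exI ballI)
      fix f assume f: "f \<in> l2 J"
      have Xf: "X f \<in> l2 J" and XXf: "X (X f) \<in> l2 J" using f by (auto intro: bop_l2[OF X])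
      have n1: "l2norm J (X f) \<le> C * l2norm J f" by (rule C[OF f])
      have n2: "l2norm J (X (X f)) \<le> C * (C * l2norm J f)"
        using C[OF Xf] n1 C0 by (meson mult_left_mono order_trans)
      have "l2norm J (polyop J c2 c1 c0 X f) =
            l2norm J (\<lambda>j. (c2 * X (X f) j + c1 * X f j) + c0 * f j)"
        unfolding polyop_def using f by simp
      also have "\<dots> \<le> 2 * (l2norm J (\<lambda>j. c2 * X (X f) j + c1 * X f j) + l2norm J (\<lambda>j. c0 * f j))"
        by (intro l2norm_add_le l2_add l2_scale Xf XXf f)
      also have "\<dots> \<le> 2 * (2 * (l2norm J (\<lambda>j. c2 * X (X f) j) + l2norm J (\<lambda>j. c1 * X f j)) + l2norm J (\<lambda>j. c0 * f j))"
        using l2norm_add_le[OF l2_scale[OF XXf, of c2] l2_scale[OF Xf, of c1]] by simp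
      also have "\<dots> = 4 * cmod c2 * l2norm J (X (X f)) + 4 * cmod c1 * l2norm J (X f) + 2 * cmod c0 * l2norm J f"
        by (simp add: l2norm_scale algebra_simps)
      also have "\<dots> \<le> 4 * cmod c2 * (C * (C * l2norm J f)) + 4 * cmod c1 * (C * l2norm J f) + 2 * cmod c0 * l2norm J f"
        by (intro add_mono mult_left_mono n1 n2) auto
      also have "\<dots> = (4 * cmod c2 * C * C + 4 * cmod c1 * C + 2 * cmod c0) * l2norm J f"
        by (simp add: algebra_simps)
      finally show "l2norm J (polyop J c2 c1 c0 X f) \<le> (4 * cmod c2 * C * C + 4 * cmod c1 * C + 2 * cmod c0) * l2norm J f" .
    qed
  qed
qed



lemma l2_scale_iff: "t \<noteq> 0 \<Longrightarrow> (\<lambda>j. t * f j) \<in> l2 J \<longleftrightarrow> f \<in> l2 J"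
proof
  assume t: "t \<noteq> 0" and "(\<lambda>j. t * f j) \<in> l2 J"
  from l2_scale[OF this(2), of "1/t"] t show "f \<in> l2 J" by simp
qed (rule l2_scale)

lemma spec_scale1:
  assumes z: "z \<notin> spectrum J X" and t: "t \<noteq> 0"
  shows "t * z \<notin> spectrum J (\<lambda>f j. t * X f j)"
proof -
  obtain B where B: "is_bop J B" and Binv: "\<And>f. f \<in> l2 J \<Longrightarrow> B (\<lambda>j. X f j - z * f j) = f \<and> (\<lambda>j. X (B f) j - z * B f j) = f"
    using z unfolding spectrum_def by blast
  define B' where "B' = (\<lambda>f. B (\<lambda>j. (1/t) * f j))"
  have B'bop: "is_bop J B'"
  proof -
    obtain C where C0: "C \<ge> 0" and C: "\<And>f. f \<in> l2 J \<Longrightarrow> l2norm J (B f) \<le> C * l2norm J f"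
      using bop_bound[OF B] by blast
    show ?thesis unfolding is_bop_def
    proof (intro conjI ballI allI impI)
      fix f assume "f \<notin> l2 J" thus "B' f = (\<lambda>j. 0)"
        unfolding B'_def using l2_scale_iff[of "1/t" f J] t by (simp add: bop_out[OF B])
    next
      fix f assume "f \<in> l2 J" thus "B' f \<in> l2 J" unfolding B'_def by (intro bop_l2[OF B] l2_scale)
    next
      fix f g assume f: "f \<in> l2 J" and g: "g \<in> l2 J"
      show "B' (\<lambda>j. f j + g j) = (\<lambda>j. B' f j + B' g j)"
        unfolding B'_def using bop_add[OF B l2_scale[OF f, of "1/t"] l2_scale[OF g, of "1/t"]]
        by (simp add: distrib_left)
    next
      fix f c assume f: "f \<in> l2 J"
      show "B' (\<lambda>j. c * f j) = (\<lambda>j. c * B' f j)"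
        unfolding B'_def using bop_scale[OF B l2_scale[OF f, of "1/t"], of c]
        by (simp add: mult.left_commute)
    next
      show "\<exists>K. \<forall>f\<in>l2 J. l2norm J (B' f) \<le> K * l2norm J f"
      proof (intro exI ballI)
        fix f assume f: "f \<in> l2 J"
        have "l2norm J (B' f) \<le> C * l2norm J (\<lambda>j. (1/t) * f j)"
          unfolding B'_def by (rule C[OF l2_scale[OF f]])
        also have "\<dots> = (C * cmod (1/t)) * l2norm J f" by (simp only: l2norm_scale mult.assoc)
        finally show "l2norm J (B' f) \<le> (C * cmod (1/t)) * l2norm J f" .
      qed
    qed
  qed
  have inv: "B' (\<lambda>j. t * X f j - t * z * f j) = f \<and> (\<lambda>j. t * X (B' f) j - t * z * B' f j) = f"
    if f: "f \<in> l2 J" for f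
  proof
    have "(\<lambda>j. (1/t) * (t * X f j - t * z * f j)) = (\<lambda>j. X f j - z * f j)"
      using t by (auto simp: fun_eq_iff field_simps)
    thus "B' (\<lambda>j. t * X f j - t * z * f j) = f" unfolding B'_def using Binv[OF f] by simp
    have "(\<lambda>j. X (B' f) j - z * B' f j) = (\<lambda>j. (1/t) * f j)"
      unfolding B'_def using Binv[OF l2_scale[OF f, of "1/t"]] by simp
    hence "(\<lambda>j. t * X (B' f) j - t * z * B' f j) = (\<lambda>j. t * ((1/t) * f j))"
      by (metis (no_types, lifting) right_diff_distrib mult.assoc)
    thus "(\<lambda>j. t * X (B' f) j - t * z * B' f j) = f" using t by simp
  qed
  show ?thesis unfolding spectrum_def using B'bop inv by blast
qed

lemma spec_scale:
  assumes t: "t \<noteq> 0"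
  shows "spectrum J (\<lambda>f j. t * X f j) = (\<lambda>z. t * z) ` spectrum J X"
proof (intro set_eqI iffI)
  fix w assume w: "w \<in> spectrum J (\<lambda>f j. t * X f j)"
  have "w / t \<in> spectrum J X"
    using spec_scale1[of "w/t" J X t] t w by auto
  moreover have "w = t * (w / t)" using t by simp
  ultimately show "w \<in> (\<lambda>z. t * z) ` spectrum J X" by blast
next
  fix w assume "w \<in> (\<lambda>z. t * z) ` spectrum J X"
  then obtain z where z: "z \<in> spectrum J X" and w: "w = t * z" by blast
  show "w \<in> spectrum J (\<lambda>f j. t * X f j)"
  proof (rule ccontr)
    assume "w \<notin> spectrum J (\<lambda>f j. t * X f j)"
    from spec_scale1[OF this, of "1/t"] t have "(1/t) * w \<notin> spectrum J (\<lambda>f j. (1/t) * (t * X f j))" by simp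
    moreover have "(\<lambda>f j. (1/t) * (t * X f j)) = X" using t by simp
    ultimately show False using z w t by simp
  qed
qed

lemma specR_scale:
  assumes t: "t \<noteq> 0"
  shows "specR J (\<lambda>f j. complex_of_real t * X f j) = (\<lambda>x. t * x) ` specR J X"
proof -
  have "complex_of_real t \<noteq> 0" using t by simp
  thus ?thesis unfolding specR_def spec_scale[OF \<open>complex_of_real t \<noteq> 0\<close>] image_image
    by simp
qed

lemma sorted_list_of_set_image_mono:
  fixes g :: "real \<Rightarrow> real"
  assumes g: "strict_mono g"
  shows "sorted_list_of_set (g ` A) = map g (sorted_list_of_set A)"
proof -
  have inj: "inj g" using g by (rule strict_mono_imp_inj_on)
  show ?thesis
proof (cases "finite A")
  case True
  have "sorted_list_of_set (g ` A) = sorted_list_of_set (set (map g (sorted_list_of_set A)))"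
    using True by simp
  also have "\<dots> = sort (remdups (map g (sorted_list_of_set A)))"
    by (rule sorted_list_of_set_sort_remdups)
  also have "remdups (map g (sorted_list_of_set A)) = map g (sorted_list_of_set A)"
    by (rule distinct_remdups_id) (simp add: distinct_map inj_on_subset[OF inj])
  also have "sort (map g (sorted_list_of_set A)) = map g (sorted_list_of_set A)"
  proof (rule sorted_sort_id)
    have s: "sorted_wrt (\<le>) (sorted_list_of_set A)" by simp
    show "sorted (map g (sorted_list_of_set A))"
      unfolding sorted_map
      by (rule sorted_wrt_mono_rel[OF _ s]) (simp add: strict_mono_less_eq[OF g])
  qed
  finally show ?thesis .
next
  case False
  hence "infinite (g ` A)" using finite_imageD[of g A] inj_on_subset[OF inj] by auto
  thus ?thesis using False by simp
qed
qed

lemma proj_factor_scale: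
  assumes t: "t > 0"
  shows "proj_factor J (\<lambda>f j. complex_of_real t * X f j) (t * lam) (t * mu) = proj_factor J X lam mu"
proof -
  have "(complex_of_real t * a - complex_of_real (t * mu) * b) / complex_of_real (t * lam - t * mu)
        = (a - complex_of_real mu * b) / complex_of_real (lam - mu)" for a b
  proof -
    have "complex_of_real t * a - complex_of_real (t * mu) * b = complex_of_real t * (a - complex_of_real mu * b)"
      by (simp add: algebra_simps)
    moreover have "complex_of_real (t * lam - t * mu) = complex_of_real t * complex_of_real (lam - mu)"
      by (simp add: algebra_simps)
    ultimately show ?thesis using t by simp
  qed
  thus ?thesis unfolding proj_factor_def by (intro ext) auto
qed

lemma spectral_proj_scale:
  assumes t: "t > 0"
  shows "spectral_proj J (\<lambda>f j. complex_of_real t * X f j) (t * lam) = spectral_proj J X lam"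
proof -
  have sm: "strict_mono (\<lambda>x::real. t * x)" using t by (simp add: strict_mono_def)
  have inj: "inj (\<lambda>x::real. t * x)" using t by (simp add: inj_on_def)
  have "specR J (\<lambda>f j. complex_of_real t * X f j) - {t * lam} = (\<lambda>x. t * x) ` (specR J X - {lam})"
    unfolding specR_scale[OF less_imp_neq[OF t, symmetric]] using t by auto
  hence e1: "sorted_list_of_set (specR J (\<lambda>f j. complex_of_real t * X f j) - {t * lam})
        = map (\<lambda>x. t * x) (sorted_list_of_set (specR J X - {lam}))"
    using sorted_list_of_set_image_mono[OF sm] by simp
  have e2: "(\<lambda>mu T. proj_factor J (\<lambda>f j. complex_of_real t * X f j) (t * lam) mu \<circ> T) \<circ> (\<lambda>x. t * x)
      = (\<lambda>mu T. proj_factor J X lam mu \<circ> T)"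
    by (intro ext) (simp add: proj_factor_scale[OF t])
  show ?thesis unfolding spectral_proj_def e1 foldr_map e2 ..
qed

lemma fcalc_scale:
  assumes t: "t > 0"
  shows "fcalc J h (\<lambda>f j. complex_of_real t * X f j) = fcalc J (\<lambda>x. h (t * x)) X"
proof -
  have inj: "inj_on (\<lambda>x::real. t * x) A" for A using t by (simp add: inj_on_def)
  show ?thesis
    unfolding fcalc_def specR_scale[of t J X, OF less_imp_neq[OF t, symmetric]]
    by (intro ext, subst sum.reindex[OF inj]) (simp add: spectral_proj_scale[OF t])
qed

lemma fcalc_cong: "(\<And>x. x \<in> specR J X \<Longrightarrow> h x = h' x) \<Longrightarrow> fcalc J h X = fcalc J h' X"
  unfolding fcalc_def by (intro ext sum.cong) auto

lemma Delta_scale: "Delta I (\<lambda>f j. c * A f j) = (\<lambda>\<psi> x. c * Delta I A \<psi> x)"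
proof (intro ext)
  fix \<psi> :: "nat \<times> nat \<Rightarrow> complex" and x :: "nat \<times> nat"
  obtain i j where x: "x = (i, j)" by (cases x)
  have "infsum (\<lambda>k. \<psi> (i, k) * (c * A (basis_vec j) k)) I = c * infsum (\<lambda>k. \<psi> (i, k) * A (basis_vec j) k) I"
    by (subst infsum_cmult_right'[symmetric]) (simp add: mult.left_commute)
  thus "Delta I (\<lambda>f j. c * A f j) \<psi> x = c * Delta I A \<psi> x"
    unfolding Delta_def x by (simp add: right_diff_distrib)
qed



lemma obs_bop: "observable J A \<Longrightarrow> is_bop J A"
  by (simp add: observable_def)

lemma obs_adj: "observable J A \<Longrightarrow> f \<in> l2 J \<Longrightarrow> g \<in> l2 J \<Longrightarrow> l2inner J (A f) g = l2inner J f (A g)"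
  by (simp add: observable_def)

lemma polyop_eq: "f \<in> l2 J \<Longrightarrow> polyop J c2 c1 c0 X f = (\<lambda>j. c2 * X (X f) j + c1 * X f j + c0 * f j)"
  by (simp add: polyop_def)

lemma polyop_adj:
  assumes X: "is_bop J X" and adj: "\<And>f g. f \<in> l2 J \<Longrightarrow> g \<in> l2 J \<Longrightarrow> l2inner J (X f) g = l2inner J f (X g)"
    and f: "f \<in> l2 J" and g: "g \<in> l2 J"
  shows "l2inner J (polyop J c2 c1 c0 X f) g = l2inner J f (polyop J (cnj c2) (cnj c1) (cnj c0) X g)"
proof -
  have Xf: "X f \<in> l2 J" and XXf: "X (X f) \<in> l2 J" and Xg: "X g \<in> l2 J" and XXg: "X (X g) \<in> l2 J"
    using f g by (auto intro!: bop_l2[OF X])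
  have "l2inner J (polyop J c2 c1 c0 X f) g =
      cnj c2 * l2inner J (X (X f)) g + cnj c1 * l2inner J (X f) g + cnj c0 * l2inner J f g"
    unfolding polyop_eq[OF f]
    by (simp add: inner_add_left l2_add l2_scale Xf XXf f g inner_scale_left)
  also have "\<dots> = cnj c2 * l2inner J f (X (X g)) + cnj c1 * l2inner J f (X g) + cnj c0 * l2inner J f g"
    using adj[OF Xf g] adj[OF f Xg] adj[OF f g] by simp
  also have "\<dots> = l2inner J f (polyop J (cnj c2) (cnj c1) (cnj c0) X g)"
    unfolding polyop_eq[OF g]
    by (simp add: inner_add_right l2_add l2_scale Xg XXg f g inner_scale_right)
  finally show ?thesis .
qed

lemma inner_self_real: 
  assumes A: "observable J A" and g: "g \<in> l2 J"
  shows "Im (l2inner J (A g) g) = 0"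
proof -
  have "l2inner J (A g) g = l2inner J g (A g)" by (rule obs_adj[OF A g g])
  also have "\<dots> = cnj (l2inner J (A g) g)" by (rule inner_commute)
  finally have "l2inner J (A g) g = cnj (l2inner J (A g) g)" .
  hence "Im (l2inner J (A g) g) = Im (cnj (l2inner J (A g) g))"
    by (rule arg_cong)
  thus ?thesis by simp
qed

lemma bdd_below_nonreal:
  assumes A: "observable J A" and r: "Im r \<noteq> 0" and g: "g \<in> l2 J"
  shows "\<bar>Im r\<bar> * l2norm J g \<le> l2norm J (\<lambda>j. A g j - r * g j)"
proof -
  have Ab: "is_bop J A" by (rule obs_bop[OF A])
  define x where "x = complex_of_real (Re r)"
  define y where "y = \<i> * complex_of_real (Im r)"
  define u where "u = (\<lambda>j. A g j - x * g j)"
  have Ag: "A g \<in> l2 J" by (rule bop_l2[OF Ab g])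
  have u: "u \<in> l2 J" unfolding u_def by (intro l2_diff l2_scale Ag g)
  have yg: "(\<lambda>j. y * g j) \<in> l2 J" by (rule l2_scale[OF g])
  have eq: "(\<lambda>j. A g j - r * g j) = (\<lambda>j. u j - y * g j)"
  proof (intro ext)
    fix j
    have "r * g j = x * g j + y * g j" unfolding x_def y_def
      by (metis complex_eq distrib_right)
    thus "A g j - r * g j = u j - y * g j" unfolding u_def by simp
  qed
  have "l2inner J u g = l2inner J (A g) g - x * complex_of_real (nsq J g)"
    unfolding u_def by (simp add: inner_diff_left Ag l2_scale g inner_scale_left x_def inner_self)
  hence im0: "Im (l2inner J u g) = 0" using inner_self_real[OF A g] by (simp add: x_def)
  have "nsq J (\<lambda>j. A g j - r * g j) = nsq J u + (Im r)^2 * nsq J g - 2 * Re (l2inner J u (\<lambda>j. y * g j))"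
    unfolding eq nsq_diff[OF u yg] nsq_scale by (simp add: y_def norm_mult)
  also have "Re (l2inner J u (\<lambda>j. y * g j)) = 0"
    unfolding inner_scale_right using im0 by (simp add: y_def)
  finally have "nsq J (\<lambda>j. A g j - r * g j) \<ge> (Im r)^2 * nsq J g" using nsq_nonneg[of J u] by simp
  hence "(\<bar>Im r\<bar> * l2norm J g)^2 \<le> (l2norm J (\<lambda>j. A g j - r * g j))^2"
    by (simp add: power_mult_distrib l2norm_sq)
  thus ?thesis by (rule power2_le_imp_le) (rule l2norm_nonneg)
qed

lemma bdd_below:
  assumes A: "observable J A" and r: "Im r \<noteq> 0 \<or> r \<notin> spectrum J A"
  obtains c where "c > 0" "\<And>g. g \<in> l2 J \<Longrightarrow> c * l2norm J g \<le> l2norm J (\<lambda>j. A g j - r * g j)"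
proof (cases "Im r \<noteq> 0")
  case True
  show ?thesis by (rule that[of "\<bar>Im r\<bar>"]) (use True bdd_below_nonreal[OF A True] in auto)
next
  case False
  hence "r \<notin> spectrum J A" using r by simp
  then obtain B where B: "is_bop J B" and Binv: "\<And>f. f \<in> l2 J \<Longrightarrow> B (\<lambda>j. A f j - r * f j) = f"
    unfolding spectrum_def by blast
  obtain C where C0: "C \<ge> 0" and C: "\<And>f. f \<in> l2 J \<Longrightarrow> l2norm J (B f) \<le> C * l2norm J f"
    using bop_bound[OF B] by blast
  show ?thesis
  proof (rule that[of "1 / (C + 1)"])
    show "0 < 1 / (C + 1)" using C0 by simp
    fix g assume g: "g \<in> l2 J"
    have Q: "(\<lambda>j. A g j - r * g j) \<in> l2 J" by (intro l2_diff l2_scale g bop_l2[OF obs_bop[OF A]])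
    have "l2norm J g \<le> C * l2norm J (\<lambda>j. A g j - r * g j)"
      using C[OF Q] Binv[OF g] by simp
    also have "\<dots> \<le> (C + 1) * l2norm J (\<lambda>j. A g j - r * g j)"
      by (intro mult_right_mono l2norm_nonneg) simp
    finally show "1 / (C + 1) * l2norm J g \<le> l2norm J (\<lambda>j. A g j - r * g j)"
      using C0 by (simp add: field_simps)
  qed
qed

lemma card_le2_obtain:
  assumes "finite R" "card R \<le> 2"
  obtains a b where "R \<subseteq> {a, b}"
proof -
  have "card R = 0 \<or> card R = 1 \<or> card R = 2" using assms(2) by auto
  thus ?thesis
  proof (elim disjE)
    assume "card R = 0" hence "R = {}" using assms(1) by simp
    thus ?thesis using that by blast
  next
    assume "card R = 1" then obtain a where "R = {a}" by (rule card_1_singletonE)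
    thus ?thesis using that by blast
  next
    assume "card R = 2" then obtain a b where "R = {a, b}" by (meson card_2_iff)
    thus ?thesis using that by blast
  qed
qed



lemma Qcomp:
  assumes A: "is_bop J A" and g: "g \<in> l2 J"
  shows "(\<lambda>j. A (\<lambda>j. A g j - b * g j) j - a * (A g j - b * g j)) = (\<lambda>j. A (A g) j - (a + b) * A g j + a * b * g j)"
proof -
  have Ag: "A g \<in> l2 J" by (rule bop_l2[OF A g])
  have "A (\<lambda>j. A g j - b * g j) = (\<lambda>j. A (A g) j - b * A g j)"
    using bop_diff[OF A Ag l2_scale[OF g, of b]] bop_scale[OF A g, of b] by simp
  thus ?thesis by (simp add: algebra_simps)
qed

lemma Q_l2: "is_bop J A \<Longrightarrow> g \<in> l2 J \<Longrightarrow> (\<lambda>j. A g j - b * g j) \<in> l2 J"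
  by (rule l2_diff[OF bop_l2 l2_scale])

lemma bdd_below2:
  assumes A: "observable J A" and r1: "Im r1 \<noteq> 0 \<or> r1 \<notin> spectrum J A" and r2: "Im r2 \<noteq> 0 \<or> r2 \<notin> spectrum J A"
  obtains c where "c > 0" "\<And>g. g \<in> l2 J \<Longrightarrow>
     c * l2norm J g \<le> l2norm J (\<lambda>j. A (A g) j - (r1 + r2) * A g j + r1 * r2 * g j)"
proof -
  have Ab: "is_bop J A" by (rule obs_bop[OF A])
  obtain c1 where c1: "c1 > 0" "\<And>g. g \<in> l2 J \<Longrightarrow> c1 * l2norm J g \<le> l2norm J (\<lambda>j. A g j - r1 * g j)"
    using bdd_below[OF A r1] by blast
  obtain c2 where c2: "c2 > 0" "\<And>g. g \<in> l2 J \<Longrightarrow> c2 * l2norm J g \<le> l2norm J (\<lambda>j. A g j - r2 * g j)"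
    using bdd_below[OF A r2] by blast
  show ?thesis
  proof (rule that[of "c1 * c2"])
    show "c1 * c2 > 0" using c1 c2 by simp
    fix g assume g: "g \<in> l2 J"
    have "c1 * c2 * l2norm J g = c1 * (c2 * l2norm J g)" by simp
    also have "\<dots> \<le> c1 * l2norm J (\<lambda>j. A g j - r2 * g j)"
      using c1(1) by (intro mult_left_mono c2(2)[OF g]) simp
    also have "\<dots> \<le> l2norm J (\<lambda>j. A (\<lambda>j. A g j - r2 * g j) j - r1 * (A g j - r2 * g j))"
      by (rule c1(2)[OF Q_l2[OF Ab g]])
    also have "\<dots> = l2norm J (\<lambda>j. A (A g) j - (r1 + r2) * A g j + r1 * r2 * g j)"
      unfolding Qcomp[OF Ab g] ..
    finally show "c1 * c2 * l2norm J g \<le> l2norm J (\<lambda>j. A (A g) j - (r1 + r2) * A g j + r1 * r2 * g j)" .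
  qed
qed

lemma quad_roots:
  fixes s p :: complex
  obtains r1 r2 where "r1 + r2 = s" "r1 * r2 = p"
proof -
  define w where "w = csqrt (s^2 - 4 * p)"
  have w2: "w^2 = s^2 - 4 * p" unfolding w_def by simp
  show ?thesis
  proof (rule that[of "(s + w) / 2" "(s - w) / 2"])
    show "(s + w) / 2 + (s - w) / 2 = s" by (simp add: field_simps)
    have "(s + w) / 2 * ((s - w) / 2) = (s^2 - w^2) / 4" by (simp add: field_simps power2_eq_square)
    also have "\<dots> = p" using w2 by simp
    finally show "(s + w) / 2 * ((s - w) / 2) = p" .
  qed
qed

lemma l2norm_pos: assumes "f \<in> l2 J" "f \<noteq> (\<lambda>j. 0)" shows "l2norm J f > 0"
proof -
  have "nsq J f \<noteq> 0" using nsq_zero[OF assms(1)] assms(2) by blast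
  hence "nsq J f > 0" using nsq_nonneg[of J f] by linarith
  thus ?thesis unfolding l2norm_nsq by simp
qed

lemma l2norm_zero_iff: assumes f: "f \<in> l2 J" shows "l2norm J f = 0 \<longleftrightarrow> f = (\<lambda>j. 0)"
proof
  assume z: "l2norm J f = 0"
  show "f = (\<lambda>j. 0)"
  proof (rule ccontr)
    assume "f \<noteq> (\<lambda>j. 0)"
    from l2norm_pos[OF f this] z show False by simp
  qed
qed simp



lemma quad_annihil:
  assumes A: "observable J A" and fin: "finite (spectrum J A)" and card: "card (spectrum J A) \<le> 2"
  shows "\<exists>\<alpha> \<beta>::real. \<forall>f\<in>l2 J. A (A f) = (\<lambda>j. complex_of_real (\<alpha> + \<beta>) * A f j - complex_of_real (\<alpha> * \<beta>) * f j)"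
proof -
  have Ab: "is_bop J A" by (rule obs_bop[OF A])
  define R where "R = {x::real. complex_of_real x \<in> spectrum J A}"
  have RS: "complex_of_real ` R \<subseteq> spectrum J A" unfolding R_def by auto
  have "R \<subseteq> Re ` spectrum J A" unfolding R_def by force
  hence finR: "finite R" using fin finite_subset by blast
  have "card R = card (complex_of_real ` R)" by (simp add: card_image inj_on_def)
  also have "\<dots> \<le> card (spectrum J A)" by (rule card_mono[OF fin RS])
  finally have "card R \<le> 2" using card by linarith
  then obtain \<alpha> \<beta> where R2: "R \<subseteq> {\<alpha>, \<beta>}" using card_le2_obtain[OF finR] by blast
  define s where "s = complex_of_real (\<alpha> + \<beta>)"
  define q where "q = complex_of_real (\<alpha> * \<beta>)"
  define T where "T = polyop J 1 (- s) q A"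
  have Tb: "is_bop J T" unfolding T_def by (rule polyop_bop[OF Ab])
  have Teq: "T f = (\<lambda>j. A (A f) j - s * A f j + q * f j)" if "f \<in> l2 J" for f
    unfolding T_def polyop_eq[OF that] by simp
  have Tadj: "l2inner J (T f) g = l2inner J f (T g)" if "f \<in> l2 J" "g \<in> l2 J" for f g
    using polyop_adj[OF Ab obs_adj[OF A] that, of 1 "- s" q] unfolding T_def
    by (simp add: s_def q_def)
  have Tl2: "T f \<in> l2 J" if "f \<in> l2 J" for f using bop_l2[OF Tb that] .
  have T0: "\<forall>f\<in>l2 J. T f = (\<lambda>j. 0)"
  proof (rule ccontr)
    assume "\<not> (\<forall>f\<in>l2 J. T f = (\<lambda>j. 0))"
    then obtain f0 where f0: "f0 \<in> l2 J" and Tf0: "T f0 \<noteq> (\<lambda>j. 0)" by blast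
    obtain C where C0: "C \<ge> 0" and C: "\<And>f. f \<in> l2 J \<Longrightarrow> l2norm J (T f) \<le> C * l2norm J f"
      using bop_bound[OF Tb] by blast
    define S where "S = (\<lambda>f. l2norm J (T f)) ` {f \<in> l2 J. l2norm J f \<le> 1}"
    define M where "M = Sup S"
    have "(\<lambda>j. 0) \<in> {f \<in> l2 J. l2norm J f \<le> 1}" by simp
    hence Sne: "S \<noteq> {}" unfolding S_def by blast
    have Sbdd: "bdd_above S" unfolding S_def
    proof (rule bdd_aboveI2)
      fix f assume f: "f \<in> {f \<in> l2 J. l2norm J f \<le> 1}"
      have "l2norm J (T f) \<le> C * l2norm J f" using C f by blast
      also have "\<dots> \<le> C * 1" using f C0 by (intro mult_left_mono) auto
      finally show "l2norm J (T f) \<le> C" by simp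
    qed
    have Sup_ub: "l2norm J (T f) \<le> M" if "f \<in> l2 J" "l2norm J f \<le> 1" for f
      unfolding M_def by (rule cSup_upper[OF _ Sbdd]) (use that in \<open>auto simp: S_def\<close>)
    have normalize: "l2norm J (T g) \<le> M * l2norm J g \<and> (l2norm J g > 0 \<longrightarrow> l2norm J (T g) / l2norm J g \<le> M)"
      if g: "g \<in> l2 J" for g
    proof (cases "g = (\<lambda>j. 0)")
      case True
      hence "T g = (\<lambda>j. 0)" using bop_zero[OF Tb] by simp
      thus ?thesis using True by simp
    next
      case False
      define n where "n = l2norm J g"
      have n: "n > 0" unfolding n_def by (rule l2norm_pos[OF g False])
      define g' where "g' = (\<lambda>j. complex_of_real (1 / n) * g j)"
      have g': "g' \<in> l2 J" unfolding g'_def by (rule l2_scale[OF g])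
      have ng': "l2norm J g' = 1" unfolding g'_def l2norm_scale using n by (simp add: n_def norm_divide)
      have "l2norm J (T g') = (1 / n) * l2norm J (T g)"
        unfolding g'_def bop_scale[OF Tb g] l2norm_scale using n by (simp add: norm_divide)
      hence "(1 / n) * l2norm J (T g) \<le> M" using Sup_ub[OF g'] ng' by simp
      hence le: "l2norm J (T g) / n \<le> M" by simp
      hence "l2norm J (T g) \<le> M * n" using n by (simp add: divide_le_eq)
      thus ?thesis using le by (simp add: n_def)
    qed
    have bound: "l2norm J (T g) \<le> M * l2norm J g" if "g \<in> l2 J" for g
      using normalize[OF that] by blast
    have Mpos: "M > 0"
    proof -
      have "l2norm J (T f0) > 0" by (rule l2norm_pos[OF Tl2[OF f0] Tf0])
      moreover have "f0 \<noteq> (\<lambda>j. 0)" using Tf0 bop_zero[OF Tb] by auto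
      hence "l2norm J f0 > 0" by (rule l2norm_pos[OF f0])
      ultimately show ?thesis using normalize[OF f0]
        by (metis divide_pos_pos order_less_le_trans)
    qed
    obtain r1 r2 where r12: "r1 + r2 = s" "r1 * r2 = q - complex_of_real M" by (rule quad_roots)
    obtain r3 r4 where r34: "r3 + r4 = s" "r3 * r4 = q + complex_of_real M" by (rule quad_roots)
    have rootok: "Im r \<noteq> 0 \<or> r \<notin> spectrum J A" if "r * r - s * r + q = e" "e \<noteq> 0" for r e
    proof (rule ccontr)
      assume "\<not> (Im r \<noteq> 0 \<or> r \<notin> spectrum J A)"
      hence im: "Im r = 0" and rs: "r \<in> spectrum J A" by auto
      have rr: "r = complex_of_real (Re r)" using im by (simp add: complex_eq_iff)
      hence "Re r \<in> R" unfolding R_def using rs by simp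
      hence "Re r = \<alpha> \<or> Re r = \<beta>" using R2 by auto
      hence "r = complex_of_real \<alpha> \<or> r = complex_of_real \<beta>" using rr by auto
      hence "r * r - s * r + q = 0" unfolding s_def q_def by (auto simp: algebra_simps)
      thus False using that by simp
    qed
    have Mne: "complex_of_real M \<noteq> 0" using Mpos by simp
    have ok1: "Im r1 \<noteq> 0 \<or> r1 \<notin> spectrum J A"
      by (rule rootok[of r1 "complex_of_real M"]) (use r12 Mne in \<open>auto simp: algebra_simps\<close>)
    have ok2: "Im r2 \<noteq> 0 \<or> r2 \<notin> spectrum J A"
      by (rule rootok[of r2 "complex_of_real M"]) (use r12 Mne in \<open>auto simp: algebra_simps\<close>)
    have ok3: "Im r3 \<noteq> 0 \<or> r3 \<notin> spectrum J A"
      by (rule rootok[of r3 "- complex_of_real M"]) (use r34 Mne in \<open>auto simp: algebra_simps\<close>)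
    have ok4: "Im r4 \<noteq> 0 \<or> r4 \<notin> spectrum J A"
      by (rule rootok[of r4 "- complex_of_real M"]) (use r34 Mne in \<open>auto simp: algebra_simps\<close>)
    obtain k1 where k1: "k1 > 0" "\<And>g. g \<in> l2 J \<Longrightarrow>
       k1 * l2norm J g \<le> l2norm J (\<lambda>j. A (A g) j - (r1 + r2) * A g j + r1 * r2 * g j)"
      using bdd_below2[OF A ok1 ok2] by blast
    obtain k2 where k2: "k2 > 0" "\<And>g. g \<in> l2 J \<Longrightarrow>
       k2 * l2norm J g \<le> l2norm J (\<lambda>j. A (A g) j - (r3 + r4) * A g j + r3 * r4 * g j)"
      using bdd_below2[OF A ok3 ok4] by blast
    define K where "K = k2 * k1"
    have Kpos: "K > 0" unfolding K_def using k1 k2 by simp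
    have key: "K * l2norm J f \<le> l2norm J (\<lambda>j. T (T f) j - complex_of_real (M^2) * f j)" if f: "f \<in> l2 J" for f
    proof -
      define h where "h = (\<lambda>j. T f j + complex_of_real M * f j)"
      have h: "h \<in> l2 J" unfolding h_def by (intro l2_add l2_scale Tl2 f)
      have hq: "h = (\<lambda>j. A (A f) j - (r3 + r4) * A f j + r3 * r4 * f j)"
        unfolding h_def Teq[OF f] r34 by (simp add: algebra_simps)
      have ThEq: "T h = (\<lambda>j. T (T f) j + complex_of_real M * T f j)"
        unfolding h_def using bop_add[OF Tb Tl2[OF f] l2_scale[OF f]] bop_scale[OF Tb f] by simp
      have hq2: "(\<lambda>j. A (A h) j - (r1 + r2) * A h j + r1 * r2 * h j) = (\<lambda>j. T (T f) j - complex_of_real (M^2) * f j)"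
      proof (intro ext)
        fix j
        have hj: "h j = T f j + complex_of_real M * f j" by (simp add: h_def)
        have "A (A h) j - (r1 + r2) * A h j + r1 * r2 * h j = T h j - complex_of_real M * h j"
          using fun_cong[OF Teq[OF h], of j] unfolding r12 by (simp add: algebra_simps)
        also have "\<dots> = T (T f) j - complex_of_real (M^2) * f j"
          unfolding fun_cong[OF ThEq, of j] hj by (simp add: algebra_simps power2_eq_square)
        finally show "A (A h) j - (r1 + r2) * A h j + r1 * r2 * h j = T (T f) j - complex_of_real (M^2) * f j" .
      qed
      have "K * l2norm J f = k1 * (k2 * l2norm J f)" unfolding K_def by simp
      also have "\<dots> \<le> k1 * l2norm J h" using k1(1) by (intro mult_left_mono) (use k2(2)[OF f] hq in auto)
      also have "\<dots> \<le> l2norm J (\<lambda>j. T (T f) j - complex_of_real (M^2) * f j)"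
        using k1(2)[OF h] hq2 by simp
      finally show ?thesis .
    qed
    define M' where "M' = sqrt (M^6 / (K^2 + M^4))"
    have M'lt: "M' < M"
    proof -
      have d: "K^2 + M^4 > 0" using Kpos by (simp add: add_pos_nonneg)
      have e6: "M^6 = M^2 * M^4" by (simp flip: power_add)
      have "0 < M^2 * K^2" using Mpos Kpos by simp
      hence "M^6 < M^2 * (K^2 + M^4)" unfolding e6 by (simp add: algebra_simps)
      hence "M^6 / (K^2 + M^4) < M^2" by (simp add: pos_divide_less_eq[OF d])
      thus ?thesis unfolding M'_def using Mpos by (simp add: real_sqrt_less_iff real_less_lsqrt)
    qed
    have ubM': "l2norm J (T f) \<le> M'" if f: "f \<in> l2 J" and f1: "l2norm J f \<le> 1" for f
    proof -
      define x where "x = nsq J (T f)"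
      define n where "n = nsq J f"
      have Tf: "T f \<in> l2 J" by (rule Tl2[OF f])
      have TTf: "T (T f) \<in> l2 J" by (rule Tl2[OF Tf])
      have Mf: "(\<lambda>j. complex_of_real (M^2) * f j) \<in> l2 J" by (rule l2_scale[OF f])
      have n1: "n \<le> 1" using f1 l2norm_nonneg[of J f] unfolding n_def l2norm_sq[symmetric]
        by (simp add: power_le_one)
      have n0: "n \<ge> 0" unfolding n_def by (rule nsq_nonneg)
      have x0: "x \<ge> 0" unfolding x_def by (rule nsq_nonneg)
      have xn: "x \<le> M^2 * n"
      proof -
        have "(l2norm J (T f))^2 \<le> (M * l2norm J f)^2"
          by (rule power_mono[OF bound[OF f]]) (rule l2norm_nonneg)
        thus ?thesis unfolding x_def n_def l2norm_sq[symmetric] by (simp add: power_mult_distrib)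
      qed
      have TTx: "nsq J (T (T f)) \<le> M^2 * x"
      proof -
        have "(l2norm J (T (T f)))^2 \<le> (M * l2norm J (T f))^2"
          by (rule power_mono[OF bound[OF Tf]]) (rule l2norm_nonneg)
        thus ?thesis unfolding x_def l2norm_sq[symmetric] by (simp add: power_mult_distrib)
      qed
      have inner: "l2inner J (T (T f)) (\<lambda>j. complex_of_real (M^2) * f j) = complex_of_real (M^2 * x)"
        unfolding inner_scale_right Tadj[OF Tf f] inner_self[OF Tf] x_def by simp
      have "nsq J (\<lambda>j. T (T f) j - complex_of_real (M^2) * f j) = nsq J (T (T f)) + M^4 * n - 2 * (M^2 * x)"
      proof -
        have "cmod (complex_of_real (M^2)) = M^2" by (simp add: norm_power)
        hence "(cmod (complex_of_real (M^2)))^2 = (M^2)^2" by simp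
        also have "(M^2)^2 = M^4" by (simp flip: power_mult)
        finally have cM: "(cmod (complex_of_real (M^2)))^2 = M^4" .
        show ?thesis unfolding nsq_diff[OF TTf Mf] nsq_scale inner n_def cM by simp
      qed
      also have "\<dots> \<le> M^4 - M^2 * x"
      proof -
        have "M^4 * n \<le> M^4 * 1" using n1 by (intro mult_left_mono) auto
        thus ?thesis using TTx by linarith
      qed
      finally have up: "nsq J (\<lambda>j. T (T f) j - complex_of_real (M^2) * f j) \<le> M^4 - M^2 * x" .
      have "(K * l2norm J f)^2 \<le> (l2norm J (\<lambda>j. T (T f) j - complex_of_real (M^2) * f j))^2"
        using key[OF f] Kpos l2norm_nonneg[of J f] by (intro power_mono) auto
      hence low: "K^2 * n \<le> M^4 - M^2 * x" unfolding l2norm_sq power_mult_distrib n_def using up by simp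
      have "K^2 * x \<le> K^2 * (M^2 * n)" using xn by (intro mult_left_mono) auto
      also have "\<dots> = M^2 * (K^2 * n)" by simp
      also have "\<dots> \<le> M^2 * (M^4 - M^2 * x)" using low by (intro mult_left_mono) auto
      finally have "K^2 * x + M^4 * x \<le> M^6"
        by (simp add: algebra_simps flip: power_add)
      hence "x * (K^2 + M^4) \<le> M^6" by (simp add: algebra_simps)
      moreover have "K^2 + M^4 > 0" using Kpos by (simp add: add_pos_nonneg)
      ultimately have "x \<le> M^6 / (K^2 + M^4)" by (simp add: le_divide_eq)
      thus ?thesis unfolding M'_def l2norm_nsq x_def[symmetric] by simp
    qed
    have "M \<le> M'" unfolding M_def
      by (rule cSup_least[OF Sne]) (auto simp: S_def intro: ubM')
    thus False using M'lt by simp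
  qed
  show ?thesis
  proof (intro exI ballI)
    fix f assume f: "f \<in> l2 J"
    have "T f = (\<lambda>j. 0)" using T0 f by blast
    hence "\<forall>j. A (A f) j - s * A f j + q * f j = 0" using Teq[OF f] by (metis)
    thus "A (A f) = (\<lambda>j. complex_of_real (\<alpha> + \<beta>) * A f j - complex_of_real (\<alpha> * \<beta>) * f j)"
      unfolding s_def q_def by (intro ext) (simp add: algebra_simps eq_neg_iff_add_eq_0[symmetric] diff_eq_eq)
  qed
qed



lemma bop_lin3:
  assumes L: "is_bop V L" and f: "f \<in> l2 V" and g: "g \<in> l2 V" and h: "h \<in> l2 V"
  shows "L (\<lambda>x. a * f x + b * g x + c * h x) = (\<lambda>x. a * L f x + b * L g x + c * L h x)"
proof -
  have "L (\<lambda>x. a * f x + b * g x + c * h x) = L (\<lambda>x. 1 * (\<lambda>x. a * f x + b * g x) x + c * h x)" by simp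
  also have "\<dots> = (\<lambda>x. 1 * L (\<lambda>x. a * f x + b * g x) x + c * L h x)"
    by (rule bop_lin[OF L l2_lin[OF f g] h])
  also have "\<dots> = (\<lambda>x. a * L f x + b * L g x + c * L h x)"
    by (simp add: bop_lin[OF L f g])
  finally show ?thesis .
qed

lemma bop_lin4:
  assumes L: "is_bop V L" and f: "f \<in> l2 V" and g: "g \<in> l2 V" and h: "h \<in> l2 V" and k: "k \<in> l2 V"
  shows "L (\<lambda>x. a * f x + b * g x + c * h x + d * k x) = (\<lambda>x. a * L f x + b * L g x + c * L h x + d * L k x)"
proof -
  have fgh: "(\<lambda>x. a * f x + b * g x + c * h x) \<in> l2 V" by (intro l2_add l2_scale f g h)
  have "L (\<lambda>x. a * f x + b * g x + c * h x + d * k x) = L (\<lambda>x. 1 * (\<lambda>x. a * f x + b * g x + c * h x) x + d * k x)" by simp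
  also have "\<dots> = (\<lambda>x. 1 * L (\<lambda>x. a * f x + b * g x + c * h x) x + d * L k x)"
    by (rule bop_lin[OF L fgh k])
  also have "\<dots> = (\<lambda>x. a * L f x + b * L g x + c * L h x + d * L k x)"
    by (simp add: bop_lin3[OF L f g h])
  finally show ?thesis .
qed

lemma cube_identity:
  assumes L: "is_bop V L" and R: "is_bop V R"
    and LL: "\<And>\<phi>. \<phi> \<in> l2 V \<Longrightarrow> L (L \<phi>) = (\<lambda>x. s * L \<phi> x - q * \<phi> x)"
    and RR: "\<And>\<phi>. \<phi> \<in> l2 V \<Longrightarrow> R (R \<phi>) = (\<lambda>x. s * R \<phi> x - q * \<phi> x)"
    and LR: "\<And>\<phi>. \<phi> \<in> l2 V \<Longrightarrow> L (R \<phi>) = R (L \<phi>)"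
    and \<phi>: "\<phi> \<in> l2 V"
  defines "D \<equiv> (\<lambda>\<psi>. \<lambda>x. L \<psi> x - R \<psi> x)"
  shows "D (D (D \<phi>)) = (\<lambda>x. (s^2 - 4 * q) * D \<phi> x)"
proof -
  define l where "l = L \<phi>"
  define r where "r = R \<phi>"
  define m where "m = L r"
  have l: "l \<in> l2 V" unfolding l_def by (rule bop_l2[OF L \<phi>])
  have r: "r \<in> l2 V" unfolding r_def by (rule bop_l2[OF R \<phi>])
  have m: "m \<in> l2 V" unfolding m_def by (rule bop_l2[OF L r])
  have Ll: "L l = (\<lambda>x. s * l x - q * \<phi> x)" unfolding l_def by (rule LL[OF \<phi>])
  have Rr: "R r = (\<lambda>x. s * r x - q * \<phi> x)" unfolding r_def by (rule RR[OF \<phi>])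
  have Rl: "R l = m" unfolding m_def l_def r_def by (rule LR[OF \<phi>, symmetric])
  have Lm: "L m = (\<lambda>x. s * m x - q * r x)" unfolding m_def by (rule LL[OF r])
  have Rm: "R m = (\<lambda>x. s * m x - q * l x)" unfolding m_def r_def l_def
    using RR[OF bop_l2[OF L \<phi>]] LR[OF \<phi>] by simp
  have D1: "D \<phi> = (\<lambda>x. l x - r x)" unfolding D_def l_def r_def ..
  have DD: "D (D \<phi>) = (\<lambda>x. s * l x + s * r x + (-2) * m x + (-2 * q) * \<phi> x)"
  proof -
    have e: "(\<lambda>x. l x - r x) = (\<lambda>x. 1 * l x + (-1) * r x)" by simp
    have "L (\<lambda>x. l x - r x) = (\<lambda>x. 1 * L l x + (-1) * L r x)" unfolding e by (rule bop_lin[OF L l r])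
    moreover have "R (\<lambda>x. l x - r x) = (\<lambda>x. 1 * R l x + (-1) * R r x)" unfolding e by (rule bop_lin[OF R l r])
    ultimately show ?thesis unfolding D1 unfolding D_def Ll Rr Rl m_def[symmetric]
      by (intro ext) (simp add: algebra_simps)
  qed
  have "L (D (D \<phi>)) = (\<lambda>x. s * L l x + s * L r x + (-2) * L m x + (-2 * q) * L \<phi> x)"
    unfolding DD by (rule bop_lin4[OF L l r m \<phi>])
  moreover have "R (D (D \<phi>)) = (\<lambda>x. s * R l x + s * R r x + (-2) * R m x + (-2 * q) * R \<phi> x)"
    unfolding DD by (rule bop_lin4[OF R l r m \<phi>])
  ultimately have "D (D (D \<phi>)) = (\<lambda>x. (s * L l x + s * L r x + (-2) * L m x + (-2 * q) * L \<phi> x)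
      - (s * R l x + s * R r x + (-2) * R m x + (-2 * q) * R \<phi> x))"
    unfolding D_def by simp
  also have "\<dots> = (\<lambda>x. (s^2 - 4 * q) * (l x - r x))"
    unfolding Ll Rr Rl Lm Rm m_def[symmetric] l_def[symmetric] r_def[symmetric]
    by (intro ext) (simp add: algebra_simps power2_eq_square)
  also have "\<dots> = (\<lambda>x. (s^2 - 4 * q) * D \<phi> x)" unfolding D1 ..
  finally show ?thesis .
qed

lemma spec_cubic:
  assumes X: "is_bop V X" and cube: "\<And>\<phi>. \<phi> \<in> l2 V \<Longrightarrow> X (X (X \<phi>)) = (\<lambda>x. c * X \<phi> x)"
    and z: "z * (z^2 - c) \<noteq> 0"
  shows "z \<notin> spectrum V X"
proof -
  define k where "k = - 1 / (z * (z^2 - c))"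
  define B where "B = polyop V k (k * z) (k * (z^2 - c)) X"
  have Bb: "is_bop V B" unfolding B_def by (rule polyop_bop[OF X])
  have inv: "B (\<lambda>j. X f j - z * f j) = f \<and> (\<lambda>j. X (B f) j - z * B f j) = f" if f: "f \<in> l2 V" for f
  proof
    have Xf: "X f \<in> l2 V" and XXf: "X (X f) \<in> l2 V" using f by (auto intro!: bop_l2[OF X])
    have g: "(\<lambda>j. X f j - z * f j) \<in> l2 V" by (intro l2_diff l2_scale Xf f)
    have Xg: "X (\<lambda>j. X f j - z * f j) = (\<lambda>j. X (X f) j - z * X f j)"
      using bop_diff[OF X Xf l2_scale[OF f]] bop_scale[OF X f] by simp
    have XXg: "X (X (\<lambda>j. X f j - z * f j)) = (\<lambda>j. c * X f j - z * X (X f) j)"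
      unfolding Xg using bop_diff[OF X XXf l2_scale[OF Xf]] bop_scale[OF X Xf] cube[OF f] by simp
    have kz: "k * (- (z * (z^2 - c))) = 1" unfolding k_def using z by simp
    show "B (\<lambda>j. X f j - z * f j) = f"
      unfolding B_def polyop_eq[OF g] unfolding XXg unfolding Xg
    proof (intro ext)
      fix j
      have "k * (c * X f j - z * X (X f) j) + k * z * (X (X f) j - z * X f j) + k * (z\<^sup>2 - c) * (X f j - z * f j)
          = (k * (- (z * (z^2 - c)))) * f j" by (simp add: algebra_simps power2_eq_square)
      thus "k * (c * X f j - z * X (X f) j) + k * z * (X (X f) j - z * X f j) + k * (z\<^sup>2 - c) * (X f j - z * f j) = f j"
        unfolding kz by simp
    qed
    have Bf: "B f = (\<lambda>j. k * X (X f) j + k * z * X f j + k * (z^2 - c) * f j)"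
      unfolding B_def polyop_eq[OF f] ..
    have XBf: "X (B f) = (\<lambda>j. k * X (X (X f)) j + k * z * X (X f) j + k * (z^2 - c) * X f j)"
      unfolding Bf by (rule bop_lin3[OF X XXf Xf f])
    show "(\<lambda>j. X (B f) j - z * B f j) = f"
      unfolding XBf cube[OF f] unfolding Bf
    proof (intro ext)
      fix j
      have "k * (c * X f j) + k * z * X (X f) j + k * (z\<^sup>2 - c) * X f j -
          z * (k * X (X f) j + k * z * X f j + k * (z\<^sup>2 - c) * f j) = (k * (- (z * (z^2 - c)))) * f j"
        by (simp add: algebra_simps power2_eq_square)
      thus "k * (c * X f j) + k * z * X (X f) j + k * (z\<^sup>2 - c) * X f j -
          z * (k * X (X f) j + k * z * X f j + k * (z\<^sup>2 - c) * f j) = f j"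
        unfolding kz by simp
    qed
  qed
  show ?thesis unfolding spectrum_def using Bb inv by blast
qed

lemma specR_cubic:
  fixes c :: real
  assumes X: "is_bop V X" and cube: "\<And>\<phi>. \<phi> \<in> l2 V \<Longrightarrow> X (X (X \<phi>)) = (\<lambda>x. complex_of_real (c^2) * X \<phi> x)"
  shows "specR V X \<subseteq> {0, c, -c}"
proof
  fix x assume "x \<in> specR V X"
  then obtain z where z: "z \<in> spectrum V X" and x: "x = Re z" unfolding specR_def by blast
  have "z * (z^2 - complex_of_real (c^2)) = 0" using spec_cubic[OF X cube] z by blast
  hence "z = 0 \<or> z^2 = (complex_of_real c)^2" by auto
  hence "z = 0 \<or> z = complex_of_real c \<or> z = - complex_of_real c"
    by (metis power2_eq_iff)
  thus "x \<in> {0, c, -c}" using x by auto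
qed



lemma basis_l2: "j \<in> I \<Longrightarrow> basis_vec j \<in> l2 I"
proof (rule l2I)
  assume j: "j \<in> I"
  show "\<And>i. i \<notin> I \<Longrightarrow> basis_vec j i = 0" using j by (auto simp: basis_vec_def)
  have "finite {i \<in> I. (cmod (basis_vec j i))^2 \<noteq> 0}" by (rule finite_subset[of _ "{j}"]) (auto simp: basis_vec_def)
  thus "(\<lambda>i. (cmod (basis_vec j i))^2) summable_on I" by (rule finite_nonzero_values_imp_summable_on)
qed

lemma basis_not_l2: "j \<notin> I \<Longrightarrow> basis_vec j \<notin> l2 I"
  using l2_out[of "basis_vec j" I j] by (auto simp: basis_vec_def)

lemma inner_basis:
  assumes j: "j \<in> I"
  shows "l2inner I (basis_vec j) g = g j"
proof -
  have "l2inner I (basis_vec j) g = infsum (\<lambda>k. cnj (basis_vec j k) * g k) {j}"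
    unfolding l2inner_def by (rule infsum_cong_neutral) (use j in \<open>auto simp: basis_vec_def\<close>)
  also have "\<dots> = g j" by (simp add: basis_vec_def)
  finally show ?thesis .
qed

lemma bop_basis_l2: "is_bop I A \<Longrightarrow> A (basis_vec j) \<in> l2 I"
  by (cases "j \<in> I") (auto simp: bop_l2 basis_l2 bop_out basis_not_l2)

lemma mat_sym:
  assumes A: "observable I A"
  shows "cnj (A (basis_vec i) m) = A (basis_vec m) i"
proof -
  have Ab: "is_bop I A" by (rule obs_bop[OF A])
  show ?thesis
  proof (cases "i \<in> I \<and> m \<in> I")
    case True
    have "l2inner I (A (basis_vec i)) (basis_vec m) = l2inner I (basis_vec i) (A (basis_vec m))"
      using True by (intro obs_adj[OF A] basis_l2) auto
    moreover have "l2inner I (A (basis_vec i)) (basis_vec m) = cnj (l2inner I (basis_vec m) (A (basis_vec i)))"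
      by (rule inner_commute)
    ultimately show ?thesis using True by (simp add: inner_basis)
  next
    case False
    show ?thesis
    proof (cases "i \<in> I")
      case True
      hence m: "m \<notin> I" using False by simp
      thus ?thesis using l2_out[OF bop_basis_l2[OF Ab, of i] m] bop_out[OF Ab basis_not_l2[OF m]] by simp
    next
      case False
      thus ?thesis using l2_out[OF bop_basis_l2[OF Ab, of m] False] bop_out[OF Ab basis_not_l2[OF False]] by simp
    qed
  qed
qed

lemma mat_rep:
  assumes A: "observable I A" and g: "g \<in> l2 I"
  shows "A g i = infsum (\<lambda>m. A (basis_vec m) i * g m) I"
proof (cases "i \<in> I")
  case True
  have "A g i = l2inner I (basis_vec i) (A g)" by (simp add: inner_basis True)
  also have "\<dots> = l2inner I (A (basis_vec i)) g" by (rule obs_adj[OF A basis_l2[OF True] g, symmetric])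
  also have "\<dots> = infsum (\<lambda>m. A (basis_vec m) i * g m) I"
    unfolding l2inner_def mat_sym[OF A] ..
  finally show ?thesis .
next
  case False
  have Ab: "is_bop I A" by (rule obs_bop[OF A])
  have "A g i = 0" by (rule l2_out[OF bop_l2[OF Ab g] False])
  moreover have "A (basis_vec m) i = 0" for m by (rule l2_out[OF bop_basis_l2[OF Ab] False])
  ultimately show ?thesis by simp
qed

lemma mat_rep_cnj:
  assumes A: "observable I A" and g: "g \<in> l2 I"
  shows "cnj (A (\<lambda>k. cnj (g k)) j) = infsum (\<lambda>k. g k * A (basis_vec j) k) I"
proof -
  have "A (\<lambda>k. cnj (g k)) j = infsum (\<lambda>m. A (basis_vec m) j * cnj (g m)) I"
    by (rule mat_rep[OF A l2_cnj[OF g]])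
  hence "cnj (A (\<lambda>k. cnj (g k)) j) = infsum (\<lambda>m. cnj (A (basis_vec m) j) * g m) I"
    by (simp flip: infsum_cnj)
  also have "\<dots> = infsum (\<lambda>k. g k * A (basis_vec j) k) I"
    unfolding mat_sym[OF A] by (simp add: mult.commute)
  finally show ?thesis .
qed

lemma cp_eta: "(\<lambda>(x, y). (cmod (\<psi> (x, y)))^2) = (\<lambda>j. (cmod (\<psi> j))^2)"
  by (auto simp: fun_eq_iff)

lemma row_l2:
  assumes \<psi>: "\<psi> \<in> l2 (I \<times> I)"
  shows "(\<lambda>k. \<psi> (i, k)) \<in> l2 I"
proof (cases "i \<in> I")
  case True
  show ?thesis
  proof (rule l2I)
    show "\<And>k. k \<notin> I \<Longrightarrow> \<psi> (i, k) = 0" using l2_out[OF \<psi>] by auto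
    have "(\<lambda>(x, y). (cmod (\<psi> (x, y)))^2) summable_on Sigma I (\<lambda>_. I)"
      unfolding cp_eta by (rule l2D[OF \<psi>])
    from summable_on_SigmaD1[OF this True]
    show "(\<lambda>k. (cmod (\<psi> (i, k)))^2) summable_on I" by simp
  qed
next
  case False
  hence "(\<lambda>k. \<psi> (i, k)) = (\<lambda>k. 0)" using l2_out[OF \<psi>] by auto
  thus ?thesis by simp
qed

lemma swap_l2:
  assumes \<psi>: "\<psi> \<in> l2 (I \<times> I)"
  shows "(\<lambda>(i, j). \<psi> (j, i)) \<in> l2 (I \<times> I)" and "nsq (I \<times> I) (\<lambda>(i, j). \<psi> (j, i)) = nsq (I \<times> I) \<psi>"
proof -
  have img: "prod.swap ` (I \<times> I) = I \<times> I" by (simp add: product_swap)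
  have inj: "inj_on prod.swap (I \<times> I)" by simp
  have e: "(\<lambda>x. (cmod ((\<lambda>(i, j). \<psi> (j, i)) x))^2) = (\<lambda>x. (cmod (\<psi> x))^2) \<circ> prod.swap"
    by (auto simp: fun_eq_iff)
  show "(\<lambda>(i, j). \<psi> (j, i)) \<in> l2 (I \<times> I)"
  proof (rule l2I)
    show "\<And>x. x \<notin> I \<times> I \<Longrightarrow> (\<lambda>(i, j). \<psi> (j, i)) x = 0" using l2_out[OF \<psi>] by auto
    have "(\<lambda>x. (cmod (\<psi> x))^2) summable_on prod.swap ` (I \<times> I)" unfolding img by (rule l2D[OF \<psi>])
    thus "(\<lambda>x. (cmod ((\<lambda>(i, j). \<psi> (j, i)) x))^2) summable_on I \<times> I"
      unfolding e using summable_on_reindex[OF inj] by blast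
  qed
  have "nsq (I \<times> I) \<psi> = infsum (\<lambda>x. (cmod (\<psi> x))^2) (prod.swap ` (I \<times> I))" unfolding img nsq_def ..
  also have "\<dots> = nsq (I \<times> I) (\<lambda>(i, j). \<psi> (j, i))" unfolding nsq_def e by (rule infsum_reindex[OF inj])
  finally show "nsq (I \<times> I) (\<lambda>(i, j). \<psi> (j, i)) = nsq (I \<times> I) \<psi>" ..
qed

lemma col_l2:
  assumes \<psi>: "\<psi> \<in> l2 (I \<times> I)"
  shows "(\<lambda>k. \<psi> (k, j)) \<in> l2 I"
  using row_l2[OF swap_l2(1)[OF \<psi>], of j] by simp

lemma nsq_rows:
  assumes \<psi>: "\<psi> \<in> l2 (I \<times> I)"
  shows "(\<lambda>i. nsq I (\<lambda>k. \<psi> (i, k))) summable_on I" and "infsum (\<lambda>i. nsq I (\<lambda>k. \<psi> (i, k))) I = nsq (I \<times> I) \<psi>"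
proof -
  have s: "(\<lambda>(x, y). (cmod (\<psi> (x, y)))^2) summable_on Sigma I (\<lambda>_. I)"
    unfolding cp_eta by (rule l2D[OF \<psi>])
  show "(\<lambda>i. nsq I (\<lambda>k. \<psi> (i, k))) summable_on I"
    unfolding nsq_def using summable_on_Sigma_banach[OF s] by simp
  show "infsum (\<lambda>i. nsq I (\<lambda>k. \<psi> (i, k))) I = nsq (I \<times> I) \<psi>"
    unfolding nsq_def using infsum_Sigma'_banach[OF s] by (simp add: cp_eta)
qed

lemma row_op:
  assumes Fl2: "\<And>g. g \<in> l2 I \<Longrightarrow> F g \<in> l2 I" and F0: "F (\<lambda>k. 0) = (\<lambda>k. 0)"
    and Fb: "\<And>g. g \<in> l2 I \<Longrightarrow> nsq I (F g) \<le> C * nsq I g" and C: "C \<ge> 0"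
    and \<psi>: "\<psi> \<in> l2 (I \<times> I)"
  shows "(\<lambda>(i, j). F (\<lambda>k. \<psi> (i, k)) j) \<in> l2 (I \<times> I)"
    and "nsq (I \<times> I) (\<lambda>(i, j). F (\<lambda>k. \<psi> (i, k)) j) \<le> C * nsq (I \<times> I) \<psi>"
proof -
  define \<Phi> where "\<Phi> = (\<lambda>(i, j). F (\<lambda>k. \<psi> (i, k)) j)"
  define \<phi> where "\<phi> = (\<lambda>i. nsq I (F (\<lambda>k. \<psi> (i, k))))"
  have rows: "(\<lambda>k. \<psi> (i, k)) \<in> l2 I" for i by (rule row_l2[OF \<psi>])
  have rs: "(\<lambda>i. nsq I (\<lambda>k. \<psi> (i, k))) summable_on I" by (rule nsq_rows(1)[OF \<psi>])
  have \<phi>s: "\<phi> summable_on I" unfolding \<phi>_def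
    by (rule summable_on_comparison_test[OF summable_on_cmult_right[OF rs, of C]])
       (use Fb[OF rows] nsq_nonneg in auto)
  have hs: "((\<lambda>y. (cmod (\<Phi> (x, y)))^2) has_sum \<phi> x) I" for x
    unfolding \<Phi>_def \<phi>_def nsq_def by (simp add: has_sum_infsum l2D Fl2 rows)
  have sumS: "(\<lambda>x. (cmod (\<Phi> x))^2) summable_on Sigma I (\<lambda>_. I)"
    by (rule summable_on_SigmaI[OF hs \<phi>s]) simp
  show l2\<Phi>: "(\<lambda>(i, j). F (\<lambda>k. \<psi> (i, k)) j) \<in> l2 (I \<times> I)"
  proof (rule l2I)
    fix x assume x: "x \<notin> I \<times> I"
    obtain i j where ij: "x = (i, j)" by (cases x)
    show "(\<lambda>(i, j). F (\<lambda>k. \<psi> (i, k)) j) x = 0"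
    proof (cases "i \<in> I")
      case True
      hence "j \<notin> I" using x ij by auto
      thus ?thesis using l2_out[OF Fl2[OF rows]] ij by simp
    next
      case False
      hence "(\<lambda>k. \<psi> (i, k)) = (\<lambda>k. 0)" using l2_out[OF \<psi>] by auto
      thus ?thesis using F0 ij by simp
    qed
  next
    show "(\<lambda>x. (cmod ((\<lambda>(i, j). F (\<lambda>k. \<psi> (i, k)) j) x))^2) summable_on I \<times> I"
      using sumS unfolding \<Phi>_def .
  qed
  have "nsq (I \<times> I) \<Phi> = infsum \<phi> I"
    using nsq_rows(2)[OF l2\<Phi>[folded \<Phi>_def]] unfolding \<phi>_def \<Phi>_def by simp
  also have "\<dots> \<le> infsum (\<lambda>i. C * nsq I (\<lambda>k. \<psi> (i, k))) I"
    by (rule infsum_mono[OF \<phi>s summable_on_cmult_right[OF rs]]) (simp add: \<phi>_def Fb rows)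
  also have "\<dots> = C * nsq (I \<times> I) \<psi>"
    by (simp add: infsum_cmult_right' nsq_rows(2)[OF \<psi>])
  finally show "nsq (I \<times> I) (\<lambda>(i, j). F (\<lambda>k. \<psi> (i, k)) j) \<le> C * nsq (I \<times> I) \<psi>"
    unfolding \<Phi>_def .
qed

lemma fubini3:
  assumes u: "u \<in> l2 I" and v: "v \<in> l2 I" and \<psi>: "\<psi> \<in> l2 (I \<times> I)"
  shows "infsum (\<lambda>m. u m * infsum (\<lambda>k. \<psi> (m, k) * v k) I) I
       = infsum (\<lambda>k. infsum (\<lambda>m. u m * \<psi> (m, k)) I * v k) I"
proof -
  define F where "F = (\<lambda>m k. u m * \<psi> (m, k) * v k)"
  have uv: "(\<lambda>(m, k). (cmod (u m * v k))^2) summable_on Sigma I (\<lambda>_. I)"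
  proof -
    have "(\<lambda>x. (\<lambda>(m, k). (cmod (u m * v k))^2) x) summable_on Sigma I (\<lambda>_. I)"
    proof (rule summable_on_SigmaI[where g="\<lambda>m. (cmod (u m))^2 * nsq I v"])
      fix m assume "m \<in> I"
      have "((\<lambda>k. (cmod (u m))^2 * (cmod (v k))^2) has_sum (cmod (u m))^2 * nsq I v) I"
        unfolding nsq_def by (intro has_sum_cmult_right has_sum_infsum l2D v)
      thus "((\<lambda>k. (\<lambda>(m, k). (cmod (u m * v k))^2) (m, k)) has_sum (cmod (u m))^2 * nsq I v) I"
        by (simp add: norm_mult power_mult_distrib)
    next
      show "(\<lambda>m. (cmod (u m))^2 * nsq I v) summable_on I"
        by (intro summable_on_cmult_left l2D u)
    qed simp
    thus ?thesis by simp
  qed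
  have sF: "(\<lambda>(m, k). F m k) summable_on I \<times> I"
  proof (rule abs_summable_summable)
    have "(\<lambda>x. (cmod (\<psi> x))^2 + (\<lambda>(m, k). (cmod (u m * v k))^2) x) summable_on I \<times> I"
      by (intro summable_on_add l2D \<psi> uv)
    hence "(\<lambda>x. norm ((\<lambda>(m, k). F m k) x)) summable_on I \<times> I"
    proof (rule Infinite_Sum.abs_summable_on_comparison_test')
      fix x assume "x \<in> I \<times> I"
      obtain m k where x: "x = (m, k)" by (cases x)
      have "cmod (\<psi> (m, k) * (u m * v k)) \<le> (cmod (\<psi> (m, k)))^2 + (cmod (u m * v k))^2"
        by (rule prod_le_sq)
      thus "norm ((\<lambda>(m, k). F m k) x) \<le> (cmod (\<psi> x))^2 + (\<lambda>(m, k). (cmod (u m * v k))^2) x"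
        unfolding x F_def by (simp add: mult_ac)
    qed
    thus "(\<lambda>x. norm ((\<lambda>(m, k). F m k) x)) summable_on I \<times> I" .
  qed
  have "infsum (\<lambda>m. u m * infsum (\<lambda>k. \<psi> (m, k) * v k) I) I = infsum (\<lambda>m. infsum (\<lambda>k. F m k) I) I"
    unfolding F_def by (simp add: infsum_cmult_right'[symmetric] mult.assoc)
  also have "\<dots> = infsum (\<lambda>k. infsum (\<lambda>m. F m k) I) I"
    by (rule infsum_swap_banach[OF sF])
  also have "\<dots> = infsum (\<lambda>k. infsum (\<lambda>m. u m * \<psi> (m, k)) I * v k) I"
    unfolding F_def by (simp add: infsum_cmult_left'[symmetric])
  finally show ?thesis .
qed



definition Lop :: "nat set \<Rightarrow> ((nat \<Rightarrow> complex) \<Rightarrow> (nat \<Rightarrow> complex)) \<Rightarrow> (nat \<times> nat \<Rightarrow> complex) \<Rightarrow> (nat \<times> nat \<Rightarrow> complex)" where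
  "Lop I A = (\<lambda>\<psi>. if \<psi> \<in> l2 (I \<times> I) then (\<lambda>(i, j). A (\<lambda>k. \<psi> (k, j)) i) else (\<lambda>x. 0))"

definition Rop :: "nat set \<Rightarrow> ((nat \<Rightarrow> complex) \<Rightarrow> (nat \<Rightarrow> complex)) \<Rightarrow> (nat \<times> nat \<Rightarrow> complex) \<Rightarrow> (nat \<times> nat \<Rightarrow> complex)" where
  "Rop I A = (\<lambda>\<psi>. if \<psi> \<in> l2 (I \<times> I) then (\<lambda>(i, j). cnj (A (\<lambda>k. cnj (\<psi> (i, k))) j)) else (\<lambda>x. 0))"

lemma nsq_bound:
  assumes A: "is_bop J A"
  obtains C where "C \<ge> 0" "\<And>g. g \<in> l2 J \<Longrightarrow> nsq J (A g) \<le> C * nsq J g"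
proof -
  obtain C where C0: "C \<ge> 0" and C: "\<And>f. f \<in> l2 J \<Longrightarrow> l2norm J (A f) \<le> C * l2norm J f"
    using bop_bound[OF A] by blast
  show ?thesis
  proof (rule that[of "C^2"])
    fix g assume g: "g \<in> l2 J"
    have "(l2norm J (A g))^2 \<le> (C * l2norm J g)^2"
      by (rule power_mono[OF C[OF g] l2norm_nonneg])
    thus "nsq J (A g) \<le> C^2 * nsq J g" by (simp add: l2norm_sq power_mult_distrib)
  qed simp
qed

lemma nsq_to_norm:
  assumes "C \<ge> 0" "nsq J f \<le> C * nsq J g"
  shows "l2norm J f \<le> sqrt C * l2norm J g"
  unfolding l2norm_nsq using assms by (simp add: real_sqrt_mult[symmetric])

lemma Lop_in:
  assumes \<psi>: "\<psi> \<in> l2 (I \<times> I)"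
  shows "Lop I A \<psi> = (\<lambda>(i, j). A (\<lambda>k. \<psi> (k, j)) i)"
  using \<psi> by (simp add: Lop_def)

lemma Rop_in:
  assumes \<psi>: "\<psi> \<in> l2 (I \<times> I)"
  shows "Rop I A \<psi> = (\<lambda>(i, j). cnj (A (\<lambda>k. cnj (\<psi> (i, k))) j))"
  using \<psi> by (simp add: Rop_def)

lemma Rop_l2:
  assumes A: "is_bop I A"
  obtains C where "C \<ge> 0" "\<And>\<psi>. \<psi> \<in> l2 (I \<times> I) \<Longrightarrow> Rop I A \<psi> \<in> l2 (I \<times> I) \<and> nsq (I \<times> I) (Rop I A \<psi>) \<le> C * nsq (I \<times> I) \<psi>"
proof -
  obtain C where C0: "C \<ge> 0" and C: "\<And>g. g \<in> l2 I \<Longrightarrow> nsq I (A g) \<le> C * nsq I g"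
    using nsq_bound[OF A] by blast
  define F where "F = (\<lambda>g j. cnj (A (\<lambda>k. cnj (g k)) j))"
  have Fl2: "F g \<in> l2 I" if "g \<in> l2 I" for g
    unfolding F_def by (intro l2_cnj bop_l2[OF A] that)
  have F0: "F (\<lambda>k. 0) = (\<lambda>k. 0)" unfolding F_def using bop_zero[OF A] by simp
  have Fb: "nsq I (F g) \<le> C * nsq I g" if "g \<in> l2 I" for g
  proof -
    have "nsq I (F g) = nsq I (A (\<lambda>k. cnj (g k)))" unfolding F_def nsq_def by simp
    also have "\<dots> \<le> C * nsq I (\<lambda>k. cnj (g k))" by (rule C[OF l2_cnj[OF that]])
    also have "nsq I (\<lambda>k. cnj (g k)) = nsq I g" unfolding nsq_def by simp
    finally show ?thesis .
  qed
  show ?thesis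
  proof (rule that[OF C0])
    fix \<psi> assume \<psi>: "\<psi> \<in> l2 (I \<times> I)"
    from row_op[OF Fl2 F0 Fb C0 \<psi>]
    show "Rop I A \<psi> \<in> l2 (I \<times> I) \<and> nsq (I \<times> I) (Rop I A \<psi>) \<le> C * nsq (I \<times> I) \<psi>"
      unfolding Rop_in[OF \<psi>] F_def by simp
  qed
qed

lemma Lop_l2:
  assumes A: "is_bop I A"
  obtains C where "C \<ge> 0" "\<And>\<psi>. \<psi> \<in> l2 (I \<times> I) \<Longrightarrow> Lop I A \<psi> \<in> l2 (I \<times> I) \<and> nsq (I \<times> I) (Lop I A \<psi>) \<le> C * nsq (I \<times> I) \<psi>"
proof -
  obtain C where C0: "C \<ge> 0" and C: "\<And>g. g \<in> l2 I \<Longrightarrow> nsq I (A g) \<le> C * nsq I g"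
    using nsq_bound[OF A] by blast
  have F0: "A (\<lambda>k. 0) = (\<lambda>k. 0)" by (rule bop_zero[OF A])
  show ?thesis
  proof (rule that[OF C0])
    fix \<psi> assume \<psi>: "\<psi> \<in> l2 (I \<times> I)"
    define \<psi>' where "\<psi>' = (\<lambda>(i, j). \<psi> (j, i))"
    have \<psi>': "\<psi>' \<in> l2 (I \<times> I)" unfolding \<psi>'_def by (rule swap_l2(1)[OF \<psi>])
    define \<Phi> where "\<Phi> = (\<lambda>(i, j). A (\<lambda>k. \<psi>' (i, k)) j)"
    have \<Phi>: "\<Phi> \<in> l2 (I \<times> I)" "nsq (I \<times> I) \<Phi> \<le> C * nsq (I \<times> I) \<psi>'"
      unfolding \<Phi>_def using row_op[OF bop_l2[OF A] F0 C C0 \<psi>'] by auto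
    have eq: "Lop I A \<psi> = (\<lambda>(i, j). \<Phi> (j, i))"
      unfolding Lop_in[OF \<psi>] \<Phi>_def \<psi>'_def by (auto simp: fun_eq_iff)
    show "Lop I A \<psi> \<in> l2 (I \<times> I) \<and> nsq (I \<times> I) (Lop I A \<psi>) \<le> C * nsq (I \<times> I) \<psi>"
      unfolding eq using swap_l2[OF \<Phi>(1)] \<Phi>(2) swap_l2(2)[OF \<psi>] unfolding \<psi>'_def by simp
  qed
qed

lemma bop_from_parts:
  assumes out: "\<And>\<psi>. \<psi> \<notin> l2 V \<Longrightarrow> L \<psi> = (\<lambda>x. 0)"
    and bnd: "\<And>\<psi>. \<psi> \<in> l2 V \<Longrightarrow> L \<psi> \<in> l2 V \<and> nsq V (L \<psi>) \<le> C * nsq V \<psi>" and C: "C \<ge> 0"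
    and add: "\<And>\<psi> \<phi>. \<psi> \<in> l2 V \<Longrightarrow> \<phi> \<in> l2 V \<Longrightarrow> L (\<lambda>x. \<psi> x + \<phi> x) = (\<lambda>x. L \<psi> x + L \<phi> x)"
    and scale: "\<And>\<psi> c. \<psi> \<in> l2 V \<Longrightarrow> L (\<lambda>x. c * \<psi> x) = (\<lambda>x. c * L \<psi> x)"
  shows "is_bop V L"
  unfolding is_bop_def
proof (intro conjI ballI allI impI)
  show "\<exists>C. \<forall>f\<in>l2 V. l2norm V (L f) \<le> C * l2norm V f"
    using bnd nsq_to_norm[OF C] by blast
qed (use out bnd add scale in auto)

lemma Lop_bop:
  assumes A: "is_bop I A"
  shows "is_bop (I \<times> I) (Lop I A)"
proof -
  obtain C where C0: "C \<ge> 0" and C: "\<And>\<psi>. \<psi> \<in> l2 (I \<times> I) \<Longrightarrow> Lop I A \<psi> \<in> l2 (I \<times> I) \<and> nsq (I \<times> I) (Lop I A \<psi>) \<le> C * nsq (I \<times> I) \<psi>"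
    using Lop_l2[OF A] by blast
  show ?thesis
  proof (rule bop_from_parts[OF _ C C0])
    show "\<And>\<psi>. \<psi> \<notin> l2 (I \<times> I) \<Longrightarrow> Lop I A \<psi> = (\<lambda>x. 0)" by (simp add: Lop_def)
  next
    fix \<psi> \<phi> assume \<psi>: "\<psi> \<in> l2 (I \<times> I)" and \<phi>: "\<phi> \<in> l2 (I \<times> I)"
    show "Lop I A (\<lambda>x. \<psi> x + \<phi> x) = (\<lambda>x. Lop I A \<psi> x + Lop I A \<phi> x)"
      unfolding Lop_in[OF \<psi>] Lop_in[OF \<phi>] Lop_in[OF l2_add[OF \<psi> \<phi>]]
      using bop_add[OF A col_l2[OF \<psi>] col_l2[OF \<phi>]] by (auto simp: fun_eq_iff)
  next
    fix \<psi> c assume \<psi>: "\<psi> \<in> l2 (I \<times> I)"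
    show "Lop I A (\<lambda>x. c * \<psi> x) = (\<lambda>x. c * Lop I A \<psi> x)"
      unfolding Lop_in[OF \<psi>] Lop_in[OF l2_scale[OF \<psi>]]
      using bop_scale[OF A col_l2[OF \<psi>]] by (auto simp: fun_eq_iff)
  qed
qed

lemma Rop_bop:
  assumes A: "is_bop I A"
  shows "is_bop (I \<times> I) (Rop I A)"
proof -
  obtain C where C0: "C \<ge> 0" and C: "\<And>\<psi>. \<psi> \<in> l2 (I \<times> I) \<Longrightarrow> Rop I A \<psi> \<in> l2 (I \<times> I) \<and> nsq (I \<times> I) (Rop I A \<psi>) \<le> C * nsq (I \<times> I) \<psi>"
    using Rop_l2[OF A] by blast
  show ?thesis
  proof (rule bop_from_parts[OF _ C C0])
    show "\<And>\<psi>. \<psi> \<notin> l2 (I \<times> I) \<Longrightarrow> Rop I A \<psi> = (\<lambda>x. 0)" by (simp add: Rop_def)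
  next
    fix \<psi> \<phi> assume \<psi>: "\<psi> \<in> l2 (I \<times> I)" and \<phi>: "\<phi> \<in> l2 (I \<times> I)"
    show "Rop I A (\<lambda>x. \<psi> x + \<phi> x) = (\<lambda>x. Rop I A \<psi> x + Rop I A \<phi> x)"
      unfolding Rop_in[OF \<psi>] Rop_in[OF \<phi>] Rop_in[OF l2_add[OF \<psi> \<phi>]]
      using bop_add[OF A l2_cnj[OF row_l2[OF \<psi>]] l2_cnj[OF row_l2[OF \<phi>]]] by (auto simp: fun_eq_iff)
  next
    fix \<psi> c assume \<psi>: "\<psi> \<in> l2 (I \<times> I)"
    show "Rop I A (\<lambda>x. c * \<psi> x) = (\<lambda>x. c * Rop I A \<psi> x)"
      unfolding Rop_in[OF \<psi>] Rop_in[OF l2_scale[OF \<psi>]]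
      using bop_scale[OF A l2_cnj[OF row_l2[OF \<psi>]], of "cnj c"] by (auto simp: fun_eq_iff)
  qed
qed

lemma Delta_LR:
  assumes A: "observable I A"
  shows "Delta I A = (\<lambda>\<psi> x. Lop I A \<psi> x - Rop I A \<psi> x)"
proof (intro ext)
  fix \<psi> :: "nat \<times> nat \<Rightarrow> complex" and x :: "nat \<times> nat"
  obtain i j where x: "x = (i, j)" by (cases x)
  show "Delta I A \<psi> x = Lop I A \<psi> x - Rop I A \<psi> x"
  proof (cases "\<psi> \<in> l2 (I \<times> I)")
    case True
    show ?thesis unfolding Delta_def Lop_in[OF True] Rop_in[OF True] x
      using mat_rep_cnj[OF A row_l2[OF True, of i], of j] True by simp
  next
    case False thus ?thesis by (simp add: Delta_def Lop_def Rop_def)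
  qed
qed



lemma Lop_sq:
  assumes A: "is_bop I A" and quad: "\<And>g. g \<in> l2 I \<Longrightarrow> A (A g) = (\<lambda>j. s * A g j - q * g j)"
    and \<psi>: "\<psi> \<in> l2 (I \<times> I)"
  shows "Lop I A (Lop I A \<psi>) = (\<lambda>x. s * Lop I A \<psi> x - q * \<psi> x)"
proof -
  have L\<psi>: "Lop I A \<psi> \<in> l2 (I \<times> I)" by (rule bop_l2[OF Lop_bop[OF A] \<psi>])
  have col: "(\<lambda>k. Lop I A \<psi> (k, j)) = A (\<lambda>k. \<psi> (k, j))" for j
    unfolding Lop_in[OF \<psi>] by simp
  show ?thesis unfolding Lop_in[OF L\<psi>] col
    by (auto simp: fun_eq_iff quad[OF col_l2[OF \<psi>]] Lop_in[OF \<psi>])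
qed

lemma Rop_sq:
  fixes s q :: real
  assumes A: "is_bop I A" and quad: "\<And>g. g \<in> l2 I \<Longrightarrow> A (A g) = (\<lambda>j. complex_of_real s * A g j - complex_of_real q * g j)"
    and \<psi>: "\<psi> \<in> l2 (I \<times> I)"
  shows "Rop I A (Rop I A \<psi>) = (\<lambda>x. complex_of_real s * Rop I A \<psi> x - complex_of_real q * \<psi> x)"
proof -
  have R\<psi>: "Rop I A \<psi> \<in> l2 (I \<times> I)" by (rule bop_l2[OF Rop_bop[OF A] \<psi>])
  have row: "(\<lambda>k. cnj (Rop I A \<psi> (i, k))) = A (\<lambda>k. cnj (\<psi> (i, k)))" for i
    unfolding Rop_in[OF \<psi>] by simp
  show ?thesis unfolding Rop_in[OF R\<psi>] row
    by (auto simp: fun_eq_iff quad[OF l2_cnj[OF row_l2[OF \<psi>]]] Rop_in[OF \<psi>])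
qed

lemma Lop_Rop_comm:
  assumes A: "observable I A" and \<psi>: "\<psi> \<in> l2 (I \<times> I)"
  shows "Lop I A (Rop I A \<psi>) = Rop I A (Lop I A \<psi>)"
proof -
  have Ab: "is_bop I A" by (rule obs_bop[OF A])
  have R\<psi>: "Rop I A \<psi> \<in> l2 (I \<times> I)" by (rule bop_l2[OF Rop_bop[OF Ab] \<psi>])
  have L\<psi>: "Lop I A \<psi> \<in> l2 (I \<times> I)" by (rule bop_l2[OF Lop_bop[OF Ab] \<psi>])
  show ?thesis
  proof (intro ext)
    fix x :: "nat \<times> nat"
    obtain i j where x: "x = (i, j)" by (cases x)
    define u where "u = (\<lambda>m. A (basis_vec m) i)"
    define v where "v = A (basis_vec j)"
    have u: "u \<in> l2 I"
    proof -
      have "u = (\<lambda>m. cnj (A (basis_vec i) m))" unfolding u_def by (simp add: mat_sym[OF A])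
      thus ?thesis by (simp add: l2_cnj bop_basis_l2[OF Ab])
    qed
    have v: "v \<in> l2 I" unfolding v_def by (rule bop_basis_l2[OF Ab])
    have "Lop I A (Rop I A \<psi>) x = A (\<lambda>k. Rop I A \<psi> (k, j)) i"
      unfolding Lop_in[OF R\<psi>] x by simp
    also have "\<dots> = infsum (\<lambda>m. u m * Rop I A \<psi> (m, j)) I"
      unfolding u_def by (rule mat_rep[OF A col_l2[OF R\<psi>]])
    also have "\<dots> = infsum (\<lambda>m. u m * infsum (\<lambda>k. \<psi> (m, k) * v k) I) I"
      unfolding Rop_in[OF \<psi>] v_def by (simp add: mat_rep_cnj[OF A row_l2[OF \<psi>]])
    also have "\<dots> = infsum (\<lambda>k. infsum (\<lambda>m. u m * \<psi> (m, k)) I * v k) I"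
      by (rule fubini3[OF u v \<psi>])
    also have "\<dots> = infsum (\<lambda>k. Lop I A \<psi> (i, k) * v k) I"
      unfolding Lop_in[OF \<psi>] u_def by (simp add: mat_rep[OF A col_l2[OF \<psi>]])
    also have "\<dots> = Rop I A (Lop I A \<psi>) x"
      unfolding Rop_in[OF L\<psi>] x v_def by (simp add: mat_rep_cnj[OF A row_l2[OF L\<psi>]])
    finally show "Lop I A (Rop I A \<psi>) x = Rop I A (Lop I A \<psi>) x" .
  qed
qed

lemma bop_minus:
  assumes L: "is_bop V L" and R: "is_bop V R"
  shows "is_bop V (\<lambda>\<psi> x. L \<psi> x - R \<psi> x)"
proof -
  obtain C1 where C1: "C1 \<ge> 0" "\<And>g. g \<in> l2 V \<Longrightarrow> nsq V (L g) \<le> C1 * nsq V g" using nsq_bound[OF L] by blast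
  obtain C2 where C2: "C2 \<ge> 0" "\<And>g. g \<in> l2 V \<Longrightarrow> nsq V (R g) \<le> C2 * nsq V g" using nsq_bound[OF R] by blast
  show ?thesis
  proof (rule bop_from_parts[where C="2 * C1 + 2 * C2"])
    fix \<psi> assume \<psi>: "\<psi> \<in> l2 V"
    have Ll: "L \<psi> \<in> l2 V" and Rl: "R \<psi> \<in> l2 V" using \<psi> L R by (auto simp: bop_l2)
    have "nsq V (\<lambda>x. L \<psi> x - R \<psi> x) = nsq V (\<lambda>x. L \<psi> x + (-1) * R \<psi> x)" by simp
    also have "\<dots> \<le> 2 * nsq V (L \<psi>) + 2 * nsq V (\<lambda>x. (-1) * R \<psi> x)"
      by (rule nsq_add_le[OF Ll l2_scale[OF Rl]])
    also have "nsq V (\<lambda>x. (-1) * R \<psi> x) = nsq V (R \<psi>)" unfolding nsq_scale by simp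
    also have "2 * nsq V (L \<psi>) + 2 * nsq V (R \<psi>) \<le> 2 * (C1 * nsq V \<psi>) + 2 * (C2 * nsq V \<psi>)"
      using C1(2)[OF \<psi>] C2(2)[OF \<psi>] by linarith
    finally show "(\<lambda>x. L \<psi> x - R \<psi> x) \<in> l2 V \<and> nsq V (\<lambda>x. L \<psi> x - R \<psi> x) \<le> (2 * C1 + 2 * C2) * nsq V \<psi>"
      using l2_diff[OF Ll Rl] by (simp add: algebra_simps)
  next
    fix \<psi> \<phi> assume \<psi>: "\<psi> \<in> l2 V" and \<phi>: "\<phi> \<in> l2 V"
    show "(\<lambda>x. L (\<lambda>x. \<psi> x + \<phi> x) x - R (\<lambda>x. \<psi> x + \<phi> x) x) = (\<lambda>x. (L \<psi> x - R \<psi> x) + (L \<phi> x - R \<phi> x))"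
      using bop_add[OF L \<psi> \<phi>] bop_add[OF R \<psi> \<phi>] by (simp add: algebra_simps)
  next
    fix \<psi> c assume \<psi>: "\<psi> \<in> l2 V"
    show "(\<lambda>x. L (\<lambda>x. c * \<psi> x) x - R (\<lambda>x. c * \<psi> x) x) = (\<lambda>x. c * (L \<psi> x - R \<psi> x))"
      using bop_scale[OF L \<psi>] bop_scale[OF R \<psi>] by (simp add: algebra_simps)
  qed (use C1 C2 bop_out[OF L] bop_out[OF R] in auto)
qed

lemma specR_Delta:
  assumes A: "observable I A" and fin: "finite (spectrum I A)" and card: "card (spectrum I A) \<le> 2"
  obtains c :: real where "specR (I \<times> I) (Delta I A) \<subseteq> {0, c, -c}"
proof -
  have Ab: "is_bop I A" by (rule obs_bop[OF A])
  obtain \<alpha> \<beta> :: real where quad: "\<And>f. f \<in> l2 I \<Longrightarrow> A (A f) = (\<lambda>j. complex_of_real (\<alpha> + \<beta>) * A f j - complex_of_real (\<alpha> * \<beta>) * f j)"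
    using quad_annihil[OF A fin card] by blast
  define D where "D = (\<lambda>\<psi> x. Lop I A \<psi> x - Rop I A \<psi> x)"
  have DD: "Delta I A = D" unfolding D_def by (rule Delta_LR[OF A])
  have Db: "is_bop (I \<times> I) (Delta I A)" unfolding DD D_def
    by (rule bop_minus[OF Lop_bop[OF Ab] Rop_bop[OF Ab]])
  have cube: "Delta I A (Delta I A (Delta I A \<phi>)) = (\<lambda>x. complex_of_real ((\<alpha> - \<beta>)^2) * Delta I A \<phi> x)"
    if \<phi>: "\<phi> \<in> l2 (I \<times> I)" for \<phi>
  proof -
    have "D (D (D \<phi>)) = (\<lambda>x. ((complex_of_real (\<alpha> + \<beta>))^2 - 4 * complex_of_real (\<alpha> * \<beta>)) * D \<phi> x)"
      unfolding D_def
      by (rule cube_identity[OF Lop_bop[OF Ab] Rop_bop[OF Ab] Lop_sq[OF Ab quad] Rop_sq[OF Ab quad] Lop_Rop_comm[OF A] \<phi>])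
    moreover have "(complex_of_real (\<alpha> + \<beta>))^2 - 4 * complex_of_real (\<alpha> * \<beta>) = complex_of_real ((\<alpha> - \<beta>)^2)"
      by (simp add: power2_eq_square algebra_simps)
    ultimately show ?thesis unfolding DD by simp
  qed
  show ?thesis using specR_cubic[OF Db cube] that by blast
qed



lemma bop_cscale:
  assumes A: "is_bop J A"
  shows "is_bop J (\<lambda>f j. c * A f j)"
proof -
  obtain C where C0: "C \<ge> 0" and C: "\<And>f. f \<in> l2 J \<Longrightarrow> l2norm J (A f) \<le> C * l2norm J f"
    using bop_bound[OF A] by blast
  show ?thesis unfolding is_bop_def
  proof (intro conjI ballI allI impI)
    show "\<exists>K. \<forall>f\<in>l2 J. l2norm J (\<lambda>j. c * A f j) \<le> K * l2norm J f"
    proof (intro exI ballI)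
      fix f assume f: "f \<in> l2 J"
      have "l2norm J (\<lambda>j. c * A f j) = cmod c * l2norm J (A f)" by (rule l2norm_scale)
      also have "\<dots> \<le> cmod c * (C * l2norm J f)" by (intro mult_left_mono C f) simp
      finally show "l2norm J (\<lambda>j. c * A f j) \<le> (cmod c * C) * l2norm J f" by simp
    qed
  qed (use A in \<open>auto simp: bop_out bop_l2 l2_scale bop_add bop_scale algebra_simps\<close>)
qed

lemma obs_rscale:
  assumes A: "observable J A"
  shows "observable J (\<lambda>f j. complex_of_real t * A f j)"
  unfolding observable_def
proof (intro conjI ballI)
  show "is_bop J (\<lambda>f j. complex_of_real t * A f j)" by (rule bop_cscale[OF obs_bop[OF A]])
  fix f g assume f: "f \<in> l2 J" and g: "g \<in> l2 J"
  show "l2inner J (\<lambda>j. complex_of_real t * A f j) g = l2inner J f (\<lambda>j. complex_of_real t * A g j)"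
    unfolding inner_scale_left inner_scale_right obs_adj[OF A f g] by simp
qed

lemma replace_obs:
  assumes p: "p > 0" and p': "p' > 0"
    and A: "observable I A" and fin: "finite (spectrum I A)" and card: "card (spectrum I A) \<le> 2"
  shows "\<exists>A'. (observable I A' \<and> finite (spectrum I A') \<and> card (spectrum I A') \<le> 2) \<and>
           abs_pow (I \<times> I) p' (Delta I A') = abs_pow (I \<times> I) p (Delta I A)"
proof -
  obtain c :: real where sc: "specR (I \<times> I) (Delta I A) \<subseteq> {0, c, -c}"
    using specR_Delta[OF A fin card] by blast
  define t where "t = (if c = 0 then 1 else \<bar>c\<bar> powr (p / p') / \<bar>c\<bar>)"
  have t: "t > 0" unfolding t_def by auto
  have tne: "complex_of_real t \<noteq> 0" using t by simp
  define A' where "A' = (\<lambda>f j. complex_of_real t * A f j)"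
  have obs: "observable I A'" unfolding A'_def by (rule obs_rscale[OF A])
  have sp: "spectrum I A' = (\<lambda>z. complex_of_real t * z) ` spectrum I A"
    unfolding A'_def by (rule spec_scale[OF tne])
  have fin': "finite (spectrum I A')" unfolding sp using fin by simp
  have card': "card (spectrum I A') \<le> 2" unfolding sp using card_image_le[OF fin] card by (meson order_trans)
  have vals: "\<bar>t * x\<bar> powr p' = \<bar>x\<bar> powr p" if x: "x \<in> specR (I \<times> I) (Delta I A)" for x
  proof -
    have x3: "x = 0 \<or> x = c \<or> x = -c" using sc x by auto
    show ?thesis
    proof (cases "x = 0")
      case True thus ?thesis by simp
    next
      case False
      hence xc: "x = c \<or> x = -c" using x3 by simp
      show ?thesis
      proof (cases "c = 0")
        case True thus ?thesis using xc by auto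
      next
        case False
        have ax: "\<bar>x\<bar> = \<bar>c\<bar>" using xc by auto
        have "\<bar>t * x\<bar> = \<bar>c\<bar> powr (p / p')" unfolding abs_mult ax using False t
          by (simp add: t_def)
        hence "\<bar>t * x\<bar> powr p' = \<bar>c\<bar> powr (p / p' * p')" by (simp add: powr_powr)
        also have "\<dots> = \<bar>x\<bar> powr p" using p' ax by simp
        finally show ?thesis .
      qed
    qed
  qed
  have "abs_pow (I \<times> I) p' (Delta I A') = fcalc (I \<times> I) (\<lambda>x. \<bar>x\<bar> powr p') (\<lambda>\<psi> x. complex_of_real t * Delta I A \<psi> x)"
    unfolding abs_pow_def A'_def Delta_scale ..
  also have "\<dots> = fcalc (I \<times> I) (\<lambda>x. \<bar>t * x\<bar> powr p') (Delta I A)"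
    by (rule fcalc_scale[OF t])
  also have "\<dots> = abs_pow (I \<times> I) p (Delta I A)"
    unfolding abs_pow_def by (rule fcalc_cong) (rule vals)
  finally show ?thesis using obs fin' card' by blast
qed

lemma Cclass_sub:
  assumes p: "p > 0" and p': "p' > 0"
  shows "Cclass I 2 p \<subseteq> Cclass I 2 p'"
proof
  fix X assume "X \<in> Cclass I 2 p"
  then obtain As where X: "X = Cop I As p"
    and As: "\<forall>A\<in>set As. observable I A \<and> finite (spectrum I A) \<and> card (spectrum I A) \<le> 2"
    unfolding Cclass_def by blast
  have "\<forall>A\<in>set As. \<exists>A'. (observable I A' \<and> finite (spectrum I A') \<and> card (spectrum I A') \<le> 2) \<and>
           abs_pow (I \<times> I) p' (Delta I A') = abs_pow (I \<times> I) p (Delta I A)"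
    using As replace_obs[OF p p'] by blast
  then obtain g where g: "\<forall>A\<in>set As. (observable I (g A) \<and> finite (spectrum I (g A)) \<and> card (spectrum I (g A)) \<le> 2) \<and>
           abs_pow (I \<times> I) p' (Delta I (g A)) = abs_pow (I \<times> I) p (Delta I A)"
    by (rule bchoice[elim_format]) blast
  have "Cop I (map g As) p' = Cop I As p"
    unfolding Cop_def
  proof (intro ext)
    fix \<psi> x
    have "map (\<lambda>A. abs_pow (I \<times> I) p' (Delta I A) \<psi> x) (map g As) = map (\<lambda>A. abs_pow (I \<times> I) p (Delta I A) \<psi> x) As"
      using g by (simp add: map_map o_def cong: map_cong)
    thus "sum_list (map (\<lambda>A. abs_pow (I \<times> I) p' (Delta I A) \<psi> x) (map g As)) =
          sum_list (map (\<lambda>A. abs_pow (I \<times> I) p (Delta I A) \<psi> x) As)" by (rule arg_cong[where f=sum_list])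
  qed
  moreover have "\<forall>A\<in>set (map g As). observable I A \<and> finite (spectrum I A) \<and> card (spectrum I A) \<le> 2"
    using g by auto
  ultimately have "\<exists>Bs. Cop I As p = Cop I Bs p' \<and> (\<forall>A\<in>set Bs. observable I A \<and> finite (spectrum I A) \<and> card (spectrum I A) \<le> 2)"
    by (intro exI[of _ "map g As"]) simp
  thus "X \<in> Cclass I 2 p'" unfolding Cclass_def X by simp
qed

theorem proposition4p2:
  fixes p p' :: real and I :: "nat set"
  assumes "p > 0" and "p' > 0"
  shows "Cclass I 2 p = Cclass I 2 p'"
  using Cclass_sub[OF assms] Cclass_sub[OF assms(2,1)] by blast

end
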